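(* Assume $\delta<d$ and $\gamma\ge1$. Then $G_z(w)=\lim_{n\to\infty}d^{-n}\log^+|Q_z^n(w)|$ exists for every $(z,w)\in\mathbb{C}^2$, and is continuous and plurisubharmonic on $A_p\times\mathbb{C}$. Moreover, the limits $$G_f(z,w)=\lim_{n\to\infty}\frac{1}{d^n}\log^+\max\{|p^n(z)|,|Q_z^n(w)|\},\qquad G_f^\alpha(z,w)=\lim_{n\to\infty}\frac{1}{d^n}\log^+\max\{|p^n(z)|^{\max\{\alpha,0\}},|Q_z^n(w)|\}$$ exist on $\mathbb{C}^2$ and $G_z(w)=G_f(z,w)=G_f^\alpha(z,w)$ on $\mathbb{C}^2$; and $G_z(w)=G_z^\alpha(w):=\lim_{n\to\infty}d^{-n}\log^+\big(|Q_z^n(w)|/|p^n(z)|^\alpha\big)$ on $A_p\times\mathbb{C}$.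
   Context: Let $p(z)=z^\delta+O(z^{\delta-1})$ be a monic polynomial of degree $\delta\ge 2$, and let $q(z,w)=b(z)w^d+(\text{terms of lower degree in } w)$ be a polynomial with $d=\deg_w q\ge 2$, where $b$ is a monic polynomial of degree $\gamma$. Let $f(z,w)=(p(z),q(z,w))$. Write $Q_z^n=q_{p^{n-1}(z)}\circ\cdots\circ q_{p(z)}\circ q_z$ with $q_z=q(z,\cdot)$, so $f^n(z,w)=(p^n(z),Q_z^n(w))$. Let $A_p=\{z: p^n(z)\to\infty\}$. For $\delta<d$, $\alpha=\max\big(\{-\gamma/(d-\delta)\}\cup\{(n_j-\gamma)/(d-m_j)\}\big)$, the second set over monomials $z^{n_j}w^{m_j}$ appearing in $q$ with nonzero coefficient and $m_j<d$. *)

theory Defs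
  imports "HOL-Analysis.Analysis" "HOL-Computational_Algebra.Polynomial"
begin

definition logplus :: "real \<Rightarrow> real" where
  "logplus x = (if x \<le> 1 then 0 else ln x)"

definition rpow :: "real \<Rightarrow> real \<Rightarrow> real" where
  "rpow x a = (if a = 0 then 1 else x powr a)"

definition usc_on :: "'a::topological_space set \<Rightarrow> ('a \<Rightarrow> real) \<Rightarrow> bool" where
  "usc_on S u \<longleftrightarrow> (\<forall>x\<in>S. \<forall>t. u x < t \<longrightarrow> eventually (\<lambda>y. u y < t) (at x within S))"

definition subharmonic_on :: "complex set \<Rightarrow> (complex \<Rightarrow> real) \<Rightarrow> bool" where
  "subharmonic_on U u \<longleftrightarrow> usc_on U u \<and>
     (\<forall>a\<in>U. \<exists>r0>0. \<forall>r. 0 < r \<and> r < r0 \<longrightarrow>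
        set_integrable lborel {0..2*pi} (\<lambda>t. u (a + of_real r * cis t)) \<and>
        u a \<le> (1 / (2*pi)) * (LINT t:{0..2*pi}|lborel. u (a + of_real r * cis t)))"

definition plurisubharmonic_on :: "(complex \<times> complex) set \<Rightarrow> (complex \<times> complex \<Rightarrow> real) \<Rightarrow> bool" where
  "plurisubharmonic_on \<Omega> u \<longleftrightarrow> open \<Omega> \<and> usc_on \<Omega> u \<and>
     (\<forall>a\<in>\<Omega>. \<forall>b. subharmonic_on {s::complex. a + (s * fst b, s * snd b) \<in> \<Omega>}
                     (\<lambda>s. u (a + (s * fst b, s * snd b))))"

text \<open>q(z,w) as a polynomial in w whose coefficients are polynomials in z.\<close>
definition evalq :: "complex poly poly \<Rightarrow> complex \<Rightarrow> complex \<Rightarrow> complex" where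
  "evalq q z w = poly (map_poly (\<lambda>a. poly a z) q) w"

fun Qit :: "complex poly \<Rightarrow> complex poly poly \<Rightarrow> nat \<Rightarrow> complex \<Rightarrow> complex \<Rightarrow> complex" where
  "Qit p q 0 z w = w"
| "Qit p q (Suc n) z w = evalq q ((poly p ^^ n) z) (Qit p q n z w)"

definition escape_set :: "complex poly \<Rightarrow> complex set" where
  "escape_set p = {z. filterlim (\<lambda>n. (poly p ^^ n) z) at_infinity sequentially}"

text \<open>alpha = max ({-gamma/(d-delta)} \<union> {(n_j-gamma)/(d-m_j)}) over monomials z^n w^m of q with
  nonzero coefficient and m < d.\<close>
definition alpha_exp :: "complex poly \<Rightarrow> complex poly poly \<Rightarrow> real" where
  "alpha_exp p q = Max ({- real (degree (lead_coeff q)) / (real (degree q) - real (degree p))}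
     \<union> {(real n - real (degree (lead_coeff q))) / (real (degree q) - real m) | n m.
           coeff (coeff q m) n \<noteq> 0 \<and> m < degree q})"

end

theory Submission
  imports Defs "HOL-Computational_Algebra.Fundamental_Theorem_Algebra"
begin


lemma L_alt: "logplus x = ln (max 1 x)"
  unfolding logplus_def by (auto simp: max_def)

lemma L_nonneg: "logplus x \<ge> 0"
  unfolding L_alt by simp

lemma L_mono: "x \<le> y \<Longrightarrow> logplus x \<le> logplus y"
  unfolding L_alt by (simp add: max_def)

lemma L_mult: "0 \<le> x \<Longrightarrow> 0 \<le> y \<Longrightarrow> logplus (x*y) \<le> logplus x + logplus y"
proof -
  assume "0 \<le> x" "0 \<le> y"
  have "x*y \<le> max 1 x * max 1 y" using \<open>0\<le>x\<close> \<open>0\<le>y\<close>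
    by (intro mult_mono) auto
  moreover have "1 * 1 \<le> max 1 x * max 1 y"
    by (rule mult_mono) auto
  ultimately have "max 1 (x*y) \<le> max 1 x * max 1 y" by simp
  hence "ln (max 1 (x*y)) \<le> ln (max 1 x * max 1 y)" by simp
  also have "\<dots> = ln (max 1 x) + ln (max 1 y)" by (simp add: ln_mult)
  finally show ?thesis unfolding L_alt .
qed

lemma L_pow: "0 \<le> x \<Longrightarrow> logplus (x^n) = real n * logplus x"
proof (cases "x \<le> 1")
  case True
  assume "0 \<le> x"
  then have "x^n \<le> 1" using True by (simp add: power_le_one)
  then show ?thesis using True unfolding logplus_def by simp
next
  case False
  assume "0 \<le> x"
  show ?thesis
  proof (cases "n = 0")
    case True thus ?thesis by (simp add: logplus_def)
  next
    case False
    have "1 < x^n" using \<open>\<not> x \<le> 1\<close> False by (simp add: one_less_power)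
    then show ?thesis using \<open>\<not> x \<le> 1\<close> unfolding logplus_def by (simp add: ln_realpow)
  qed
qed

lemma L_ge_ln: "0 < x \<Longrightarrow> ln x \<le> logplus x"
  unfolding L_alt by simp

lemma L_max: "logplus (max x y) = max (logplus x) (logplus y)"
  by (simp add: max_def L_mono antisym)

lemma L_cont: "continuous_on A logplus"
  unfolding L_alt[abs_def] by (intro continuous_intros) auto

lemma L_one_le: "1 \<le> x \<Longrightarrow> logplus x = ln x"
  unfolding L_alt by simp

lemma L_div: assumes "0 \<le> x" "0 < y" shows "\<bar>logplus (x/y) - logplus x\<bar> \<le> \<bar>ln y\<bar>"
proof -
  have a: "logplus x \<le> logplus (x/y) + logplus y"
    using L_mult[of "x/y" y] assms by simp
  have b: "logplus (x/y) \<le> logplus x + logplus (1/y)"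
    using L_mult[of x "1/y"] assms by simp
  show ?thesis
  proof (cases "y \<le> 1")
    case True
    have "logplus y = 0" using True by (simp add: logplus_def)
    moreover have "logplus (1/y) = - ln y" using True assms by (simp add: L_one_le ln_div)
    moreover have "ln y \<le> 0" using True assms by simp
    ultimately show ?thesis using a b by linarith
  next
    case False
    have "logplus y = ln y" using False by (simp add: L_one_le)
    moreover have "logplus (1/y) = 0" using False by (simp add: logplus_def)
    moreover have "ln y \<ge> 0" using False by simp
    ultimately show ?thesis using a b by linarith
  qed
qed

lemma L_rpow: assumes "0 \<le> x" "0 \<le> a" shows "0 \<le> logplus (rpow x a)" "logplus (rpow x a) \<le> a * logplus x"
proof -
  show "0 \<le> logplus (rpow x a)" by (rule L_nonneg)
  show "logplus (rpow x a) \<le> a * logplus x"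
  proof (cases "a = 0 \<or> x = 0")
    case True thus ?thesis by (auto simp: rpow_def logplus_def)
  next
    case False
    hence xa: "x > 0" "a > 0" using assms by auto
    have "rpow x a = x powr a" using False by (simp add: rpow_def)
    also have "\<dots> \<le> (max 1 x) powr a" using xa by (intro powr_mono2) auto
    finally have "logplus (rpow x a) \<le> logplus ((max 1 x) powr a)" by (rule L_mono)
    also have "\<dots> = ln ((max 1 x) powr a)"
    proof (rule L_one_le)
      show "1 \<le> max 1 x powr a" by (rule ge_one_powr_ge_zero) (use xa in auto)
    qed
    also have "\<dots> = a * ln (max 1 x)" by (simp add: ln_powr)
    finally show ?thesis unfolding L_alt .
  qed
qed




lemma poly_sum_le_deg: fixes P :: "'a::comm_semiring_1 poly"
  assumes "degree P \<le> n" shows "poly P x = (\<Sum>i\<le>n. coeff P i * x^i)"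
proof -
  have "poly P x = (\<Sum>i\<le>degree P. coeff P i * x^i)" by (simp add: poly_altdef)
  also have "\<dots> = (\<Sum>i\<le>n. coeff P i * x^i)"
    by (rule sum.mono_neutral_left) (use assms in \<open>auto simp: coeff_eq_0\<close>)
  finally show ?thesis .
qed

lemma evalq_sum: "evalq q z w = (\<Sum>m\<le>degree q. poly (coeff q m) z * w^m)"
proof -
  have "degree (map_poly (\<lambda>a. poly a z) q) \<le> degree q" by (rule map_poly_degree_leq)
  then show ?thesis unfolding evalq_def
    by (subst poly_sum_le_deg) (auto simp: coeff_map_poly)
qed

lemma poly_bound: fixes P :: "complex poly"
  shows "norm (poly P x) \<le> (\<Sum>i\<le>degree P. norm (coeff P i)) * max 1 (norm x) ^ degree P"
proof -
  have "norm (poly P x) = norm (\<Sum>i\<le>degree P. coeff P i * x^i)" by (simp add: poly_altdef)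
  also have "\<dots> \<le> (\<Sum>i\<le>degree P. norm (coeff P i) * norm x ^ i)"
    by (rule order.trans[OF norm_sum]) (simp add: norm_mult norm_power)
  also have "\<dots> \<le> (\<Sum>i\<le>degree P. norm (coeff P i) * max 1 (norm x) ^ degree P)"
  proof (rule sum_mono, rule mult_left_mono)
    fix i assume "i \<in> {..degree P}"
    have "norm x ^ i \<le> max 1 (norm x) ^ i" by (rule power_mono) auto
    also have "\<dots> \<le> max 1 (norm x) ^ degree P" using \<open>i \<in> _\<close> by (intro power_increasing) auto
    finally show "norm x ^ i \<le> max 1 (norm x) ^ degree P" .
  qed auto
  also have "\<dots> = (\<Sum>i\<le>degree P. norm (coeff P i)) * max 1 (norm x) ^ degree P"
    by (simp add: sum_distrib_right)
  finally show ?thesis .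
qed

lemma monic_bound: fixes P :: "complex poly"
  assumes "lead_coeff P = 1" "degree P = k" "k \<ge> 1" "norm x \<ge> 1"
  shows "norm (poly P x - x^k) \<le> (\<Sum>i<k. norm (coeff P i)) * norm x ^ (k-1)"
proof -
  have "poly P x = (\<Sum>i<Suc k. coeff P i * x^i)" using assms(2) by (simp add: poly_altdef lessThan_Suc_atMost)
  also have "\<dots> = (\<Sum>i<k. coeff P i * x^i) + x^k" using assms(1,2) by simp
  finally have "poly P x - x^k = (\<Sum>i<k. coeff P i * x^i)" by simp
  hence "norm (poly P x - x^k) \<le> (\<Sum>i<k. norm (coeff P i) * norm x ^ i)"
    by (metis (no_types, lifting) norm_mult norm_power norm_sum sum.cong)
  also have "\<dots> \<le> (\<Sum>i<k. norm (coeff P i) * norm x ^ (k-1))"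
    by (intro sum_mono mult_left_mono power_increasing) (use assms in auto)
  also have "\<dots> = (\<Sum>i<k. norm (coeff P i)) * norm x ^ (k-1)" by (simp add: sum_distrib_right)
  finally show ?thesis .
qed

lemma L_max1_pow: "logplus (max 1 t ^ k) = real k * logplus t"
  by (subst L_pow) (auto simp: L_alt)

lemma L_mult3: "0 \<le> a \<Longrightarrow> 0 \<le> b \<Longrightarrow> 0 \<le> c \<Longrightarrow> logplus (a*b*c) \<le> logplus a + logplus b + logplus c"
  by (smt (verit) L_mult mult_nonneg_nonneg)

lemma L_poly_bound: fixes P :: "complex poly"
  shows "logplus (norm (poly P x)) \<le> logplus (\<Sum>i\<le>degree P. norm (coeff P i)) + real (degree P) * logplus (norm x)"
proof -
  have "logplus (norm (poly P x)) \<le> logplus ((\<Sum>i\<le>degree P. norm (coeff P i)) * max 1 (norm x) ^ degree P)"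
    by (rule L_mono[OF poly_bound])
  also have "\<dots> \<le> logplus (\<Sum>i\<le>degree P. norm (coeff P i)) + logplus (max 1 (norm x) ^ degree P)"
    by (rule L_mult) (auto intro: sum_nonneg)
  finally show ?thesis by (simp add: L_max1_pow)
qed

definition qB :: "complex poly poly \<Rightarrow> real" where
  "qB q = (\<Sum>m\<le>degree q. \<Sum>i\<le>degree (coeff q m). norm (coeff (coeff q m) i))"
definition qE :: "complex poly poly \<Rightarrow> nat" where
  "qE q = (\<Sum>m\<le>degree q. degree (coeff q m))"

lemma evalq_bound:
  "norm (evalq q z w) \<le> qB q * max 1 (norm z) ^ qE q * max 1 (norm w) ^ degree q"
proof -
  let ?Mz = "max 1 (norm z)" and ?Mw = "max 1 (norm w)"
  have "norm (evalq q z w) \<le> (\<Sum>m\<le>degree q. norm (poly (coeff q m) z) * norm w ^ m)"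
    unfolding evalq_sum by (rule order.trans[OF norm_sum]) (simp add: norm_mult norm_power)
  also have "\<dots> \<le> (\<Sum>m\<le>degree q. ((\<Sum>i\<le>degree (coeff q m). norm (coeff (coeff q m) i)) * ?Mz ^ qE q) * ?Mw ^ degree q)"
  proof (rule sum_mono, rule mult_mono)
    fix m assume m: "m \<in> {..degree q}"
    have "norm (poly (coeff q m) z) \<le> (\<Sum>i\<le>degree (coeff q m). norm (coeff (coeff q m) i)) * ?Mz ^ degree (coeff q m)"
      by (rule poly_bound)
    also have "\<dots> \<le> (\<Sum>i\<le>degree (coeff q m). norm (coeff (coeff q m) i)) * ?Mz ^ qE q"
    proof (rule mult_left_mono[OF power_increasing])
      show "degree (coeff q m) \<le> qE q" unfolding qE_def
        using m by (intro member_le_sum) auto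
    qed (auto intro: sum_nonneg)
    finally show "norm (poly (coeff q m) z) \<le> (\<Sum>i\<le>degree (coeff q m). norm (coeff (coeff q m) i)) * ?Mz ^ qE q" .
    show "norm w ^ m \<le> ?Mw ^ degree q"
      using m by (intro order.trans[OF power_mono[of "norm w" ?Mw] power_increasing]) auto
  qed (auto intro!: sum_nonneg mult_nonneg_nonneg)
  also have "\<dots> = qB q * ?Mz ^ qE q * ?Mw ^ degree q"
    unfolding qB_def by (simp add: sum_distrib_right)
  finally show ?thesis .
qed

lemma qB_nonneg: "qB q \<ge> 0" unfolding qB_def by (auto intro!: sum_nonneg)

lemma L_evalq_bound:
  "logplus (norm (evalq q z w)) \<le> logplus (qB q) + real (qE q) * logplus (norm z) + real (degree q) * logplus (norm w)"
proof -
  have "logplus (norm (evalq q z w)) \<le> logplus (qB q * max 1 (norm z) ^ qE q * max 1 (norm w) ^ degree q)"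
    by (rule L_mono[OF evalq_bound])
  also have "\<dots> \<le> logplus (qB q) + logplus (max 1 (norm z) ^ qE q) + logplus (max 1 (norm w) ^ degree q)"
    by (rule L_mult3) (auto simp: qB_nonneg)
  finally show ?thesis by (simp add: L_max1_pow)
qed




locale setting =
  fixes p :: "complex poly" and q :: "complex poly poly" and \<delta> d \<gamma> :: nat
  assumes p_monic: "lead_coeff p = 1" and p_deg: "degree p = \<delta>" and \<delta>_ge: "\<delta> \<ge> 2"
    and q_deg: "degree q = d" and d_ge: "d \<ge> 2"
    and b_monic: "lead_coeff (lead_coeff q) = 1" and b_deg: "degree (lead_coeff q) = \<gamma>"
    and \<delta>_lt: "\<delta> < d" and \<gamma>_ge: "\<gamma> \<ge> 1"
begin

definition "Cp = logplus (\<Sum>i\<le>degree p. norm (coeff p i))"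
definition "Cq = logplus (qB q)"
definition "E = real (qE q)"
definition "zs n z = (poly p ^^ n) z"
definition "A n z w = logplus (norm (Qit p q n z w))"
definition "F n z w = A n z w / real d ^ n"
definition "K z = logplus (norm z) + Cp"
definition "T n k = Cq / ((real d - 1) * real d ^ n) + E * k * real \<delta> ^ n / ((real d - real \<delta>) * real d ^ n)"

lemma Cp_nonneg: "Cp \<ge> 0" and Cq_nonneg: "Cq \<ge> 0" and E_nonneg: "E \<ge> 0" and K_nonneg: "K z \<ge> 0"
  by (auto simp: Cp_def Cq_def E_def K_def L_nonneg add_nonneg_nonneg)

lemma d_pos: "real d > 1" using d_ge by simp

lemma zs_Suc: "zs (Suc n) z = poly p (zs n z)" by (simp add: zs_def)
lemma zs_0: "zs 0 z = z" by (simp add: zs_def)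
lemma Qit_Suc: "Qit p q (Suc n) z w = evalq q (zs n z) (Qit p q n z w)" by (simp add: zs_def)

lemma Lp: "logplus (norm (poly p x)) \<le> Cp + real \<delta> * logplus (norm x)"
  using L_poly_bound[of p x] by (simp add: Cp_def p_deg)

lemma Lz': "logplus (norm (zs n z)) + Cp \<le> real \<delta> ^ n * K z"
proof (induction n)
  case 0 thus ?case by (simp add: zs_0 K_def)
next
  case (Suc n)
  have "logplus (norm (zs (Suc n) z)) + Cp \<le> 2 * Cp + real \<delta> * logplus (norm (zs n z))"
    using Lp[of "zs n z"] by (simp add: zs_Suc)
  also have "\<dots> \<le> real \<delta> * (logplus (norm (zs n z)) + Cp)"
  proof -
    have "2 * Cp \<le> real \<delta> * Cp" using Cp_nonneg \<delta>_ge by (intro mult_right_mono) auto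
    thus ?thesis by (simp add: algebra_simps)
  qed
  also have "\<dots> \<le> real \<delta> * (real \<delta> ^ n * K z)"
    using Suc by (intro mult_left_mono) auto
  finally show ?case by simp
qed

lemma Lz: "logplus (norm (zs n z)) \<le> real \<delta> ^ n * K z"
  using Lz'[of n z] Cp_nonneg by linarith

lemma Astep: "A (Suc n) z w \<le> Cq + E * logplus (norm (zs n z)) + real d * A n z w"
  using L_evalq_bound[of q "zs n z" "Qit p q n z w"]
  by (simp add: A_def Cq_def E_def q_deg zs_def)

lemma Astep': "A (Suc n) z w \<le> Cq + E * real \<delta> ^ n * K z + real d * A n z w"
  using Astep[of n z w] Lz[of n z] E_nonneg
  by (smt (verit, best) mult.assoc mult_left_mono)

lemma aux_div1: fixes X c D :: real assumes "c > 0" "D > 0"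
  shows "X / (c * D) - X / (c * ((c + 1) * D)) = X / ((c + 1) * D)"
proof -
  have "c + 1 > 0" using assms by simp
  hence nz: "c \<noteq> 0" "D \<noteq> 0" "c + 1 \<noteq> 0" using assms by auto
  show ?thesis using nz by (simp add: divide_simps) (simp add: algebra_simps)
qed
lemma aux_div2: fixes Y e t D :: real assumes "e > 0" "D > 0" "t \<ge> 0"
  shows "Y / (e * D) - Y * t / (e * ((e + t) * D)) = Y / ((e + t) * D)"
proof -
  have "e + t > 0" using assms by simp
  hence nz: "e \<noteq> 0" "D \<noteq> 0" "e + t \<noteq> 0" using assms by auto
  show ?thesis using nz by (simp add: divide_simps) (simp add: algebra_simps)
qed

lemma T_diff: "T n k - T (Suc n) k = (Cq + E * k * real \<delta> ^ n) / real d ^ Suc n"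
proof -
  define D where "D = real d ^ n"
  have D: "D > 0" using d_pos by (simp add: D_def)
  have h1: "real d - 1 > 0" "real d - real \<delta> > 0" using d_pos \<delta>_lt by auto
  have "T n k - T (Suc n) k = Cq / ((real d - 1) * D) - Cq / ((real d - 1) * (real d * D))
     + ((E * k * real \<delta> ^ n) / ((real d - real \<delta>) * D) - (E * k * real \<delta> ^ n) * real \<delta> / ((real d - real \<delta>) * (real d * D)))"
    unfolding T_def D_def by (simp add: algebra_simps)
  also have "Cq / ((real d - 1) * D) - Cq / ((real d - 1) * (real d * D)) = Cq / (real d * D)"
    using aux_div1[OF h1(1) D, of Cq] by simp
  also have "(E * k * real \<delta> ^ n) / ((real d - real \<delta>) * D) - (E * k * real \<delta> ^ n) * real \<delta> / ((real d - real \<delta>) * (real d * D))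
     = E * k * real \<delta> ^ n / (real d * D)"
    using aux_div2[OF h1(2) D, of "real \<delta>" "E * k * real \<delta> ^ n"] by simp
  finally show ?thesis by (simp add: D_def add_divide_distrib)
qed

lemma T_nonneg: "k \<ge> 0 \<Longrightarrow> T n k \<ge> 0"
  using d_pos \<delta>_lt Cq_nonneg E_nonneg unfolding T_def
  by (intro add_nonneg_nonneg divide_nonneg_pos mult_nonneg_nonneg) auto

lemma F_step_gen: "F (Suc n) z w \<le> F n z w + (Cq + E * real \<delta> ^ n * K z) / real d ^ Suc n"
proof -
  have "F (Suc n) z w \<le> (Cq + E * real \<delta> ^ n * K z + real d * A n z w) / real d ^ Suc n"
    unfolding F_def using Astep' d_pos by (intro divide_right_mono) auto
  also have "\<dots> = F n z w + (Cq + E * real \<delta> ^ n * K z) / real d ^ Suc n"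
    unfolding F_def using d_pos by (simp add: field_simps)
  finally show ?thesis .
qed

lemma v_dec: "F (Suc n) z w + T (Suc n) (K z) \<le> F n z w + T n (K z)"
  using F_step_gen[of n z w] T_diff[of n "K z"] by (simp add: algebra_simps)

lemma F_nonneg: "F n z w \<ge> 0" unfolding F_def A_def using d_pos by (simp add: L_nonneg)

lemma T_lim: "(\<lambda>n. T n k) \<longlonglongrightarrow> 0"
proof -
  have a: "(\<lambda>n. (1 / real d) ^ n) \<longlonglongrightarrow> 0" using d_pos by (intro LIMSEQ_power_zero) auto
  have b: "(\<lambda>n. (real \<delta> / real d) ^ n) \<longlonglongrightarrow> 0" using d_pos \<delta>_lt by (intro LIMSEQ_power_zero) auto
  have "(\<lambda>n. Cq / (real d - 1) * (1 / real d) ^ n + E * k / (real d - real \<delta>) * (real \<delta> / real d) ^ n) \<longlonglongrightarrow> Cq / (real d - 1) * 0 + E * k / (real d - real \<delta>) * 0"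
    by (intro tendsto_intros a b)
  moreover have "\<And>n. T n k = Cq / (real d - 1) * (1 / real d) ^ n + E * k / (real d - real \<delta>) * (real \<delta> / real d) ^ n"
    unfolding T_def by (simp add: field_simps power_divide)
  ultimately show ?thesis by simp
qed

lemma ratio_lim: "(\<lambda>n. c * real \<delta> ^ n / real d ^ n) \<longlonglongrightarrow> 0"
proof -
  have b: "(\<lambda>n. (real \<delta> / real d) ^ n) \<longlonglongrightarrow> 0" using d_pos \<delta>_lt by (intro LIMSEQ_power_zero) auto
  have "(\<lambda>n. c * (real \<delta> / real d) ^ n) \<longlonglongrightarrow> c * 0" by (intro tendsto_intros b)
  thus ?thesis by (simp add: power_divide)
qed

lemma F_conv: "convergent (\<lambda>n. F n z w)"
proof -
  have dec: "decseq (\<lambda>n. F n z w + T n (K z))"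
    by (rule decseq_SucI) (rule v_dec)
  have "\<forall>i. 0 \<le> F i z w + T i (K z)" by (intro allI add_nonneg_nonneg F_nonneg T_nonneg K_nonneg)
  then obtain L where "(\<lambda>n. F n z w + T n (K z)) \<longlonglongrightarrow> L" using decseq_convergent[OF dec] by metis
  hence "(\<lambda>n. (F n z w + T n (K z)) - T n (K z)) \<longlonglongrightarrow> L - 0" by (intro tendsto_intros T_lim)
  thus ?thesis by (auto simp: convergent_def)
qed

definition "G z w = lim (\<lambda>n. F n z w)"

lemma F_lim: "(\<lambda>n. F n z w) \<longlonglongrightarrow> G z w"
  unfolding G_def using F_conv convergent_LIMSEQ_iff by blast

lemma G_nonneg: "G z w \<ge> 0"
  by (rule LIMSEQ_le_const[OF F_lim]) (auto simp: F_nonneg)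

lemma F_upper_shift: "F (n + k) z w \<le> F n z w + T n (K z)"
proof -
  have "F (n+k) z w + T (n+k) (K z) \<le> F n z w + T n (K z)"
    using decseq_SucI[of "\<lambda>n. F n z w + T n (K z)", OF v_dec] by (simp add: decseq_def)
  thus ?thesis using T_nonneg[OF K_nonneg] by smt
qed

lemma zs_ratio_lim: "(\<lambda>n. logplus (norm (zs n z)) / real d ^ n) \<longlonglongrightarrow> 0"
proof (rule tendsto_sandwich[of "\<lambda>_. 0" _ _ "\<lambda>n. K z * real \<delta> ^ n / real d ^ n"])
  show "\<forall>\<^sub>F n in sequentially. 0 \<le> logplus (norm (zs n z)) / real d ^ n" by (simp add: L_nonneg)
  show "\<forall>\<^sub>F n in sequentially. logplus (norm (zs n z)) / real d ^ n \<le> K z * real \<delta> ^ n / real d ^ n"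
    using Lz d_pos by (intro always_eventually allI divide_right_mono) (auto simp: mult.commute)
qed (auto intro: ratio_lim)

end



lemma term_bound:
  fixes z w :: complex and R a g :: real and n m dd :: nat
  assumes z1: "norm z \<ge> 1" and R1: "R \<ge> 1" and wR: "norm w \<ge> R * norm z powr a"
    and md: "m < dd" and na: "real n \<le> g + a * (real dd - real m)" and g: "g \<ge> 0"
  shows "norm z ^ n * norm w ^ m \<le> (norm z powr g * norm w ^ dd) / R"
proof -
  have zpos: "norm z > 0" using z1 by linarith
  have "z \<noteq> 0" using zpos by auto
  hence zpa: "norm z powr a > 0" by simp
  have wpos: "norm w > 0" using wR R1 zpa
    by (smt (verit) mult_pos_pos)
  define k where "k = dd - m"
  have k1: "k \<ge> 1" using md by (simp add: k_def)
  have rk: "real k = real dd - real m" using md by (simp add: k_def)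
  have "R * norm z powr (real k * a) = R * (norm z powr a) ^ k"
    using zpos by (simp add: powr_power)
  also have "\<dots> \<le> R ^ k * (norm z powr a) ^ k"
    using R1 k1 zpa by (intro mult_right_mono) (auto simp: self_le_power)
  also have "\<dots> = (R * norm z powr a) ^ k" by (simp add: power_mult_distrib)
  also have "\<dots> \<le> norm w ^ k" using wR R1 zpa by (intro power_mono) auto
  finally have wk: "R * norm z powr (real k * a) \<le> norm w ^ k" .
  have "norm z ^ n = norm z powr real n" using zpos by (simp add: powr_realpow)
  also have "\<dots> \<le> norm z powr (g + real k * a)"
  proof (rule powr_mono)
    have "a * real k = a * (real dd - real m)" using rk by simp
    hence "a * real k = a * real dd - a * real m" by (simp add: right_diff_distrib)
    thus "real n \<le> g + real k * a" using na by (simp add: algebra_simps)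
  qed (use z1 in auto)
  also have "\<dots> = norm z powr g * norm z powr (real k * a)" by (simp add: powr_add)
  also have "\<dots> \<le> norm z powr g * (norm w ^ k / R)"
    using wk R1 by (intro mult_left_mono) (auto simp: field_simps)
  finally have "norm z ^ n * norm w ^ m \<le> norm z powr g * (norm w ^ k / R) * norm w ^ m"
    by (intro mult_right_mono) auto
  also have "\<dots> = (norm z powr g * norm w ^ dd) / R"
    using md by (simp add: k_def power_add[symmetric])
  finally show ?thesis .
qed

context setting begin

definition "\<alpha> = alpha_exp p q"

lemma alpha_ge: assumes "coeff (coeff q m) n \<noteq> 0" "m < d"
  shows "(real n - real \<gamma>) / (real d - real m) \<le> \<alpha>"
proof -
  let ?S = "{(real n - real (degree (lead_coeff q))) / (real (degree q) - real m) | n m.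
           coeff (coeff q m) n \<noteq> 0 \<and> m < degree q}"
  have "?S \<subseteq> (\<lambda>(n,m). (real n - real (degree (lead_coeff q))) / (real (degree q) - real m)) ` ({..qE q} \<times> {..<degree q})"
  proof
    fix x assume "x \<in> ?S"
    then obtain n m where x: "x = (real n - real (degree (lead_coeff q))) / (real (degree q) - real m)"
      and c: "coeff (coeff q m) n \<noteq> 0" and m: "m < degree q" by blast
    have "n \<le> degree (coeff q m)" using c le_degree by blast
    also have "\<dots> \<le> qE q" unfolding qE_def using m by (intro member_le_sum) auto
    finally show "x \<in> (\<lambda>(n,m). (real n - real (degree (lead_coeff q))) / (real (degree q) - real m)) ` ({..qE q} \<times> {..<degree q})" using x m by force
  qed
  hence fin: "finite ?S" by (rule finite_subset) auto
  have "(real n - real (degree (lead_coeff q))) / (real (degree q) - real m) \<in> ?S"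
    using assms q_deg by blast
  hence "(real n - real (degree (lead_coeff q))) / (real (degree q) - real m) \<le> Max ({- real (degree (lead_coeff q)) / (real (degree q) - real (degree p))} \<union> ?S)"
    using fin by (intro Max_ge) auto
  moreover have bd: "degree (coeff q d) = \<gamma>" using b_deg q_deg by simp
  ultimately show ?thesis unfolding \<alpha>_def alpha_exp_def by (simp only: b_deg q_deg bd)
qed

lemma alpha_ge': assumes "coeff (coeff q m) n \<noteq> 0" "m < d"
  shows "real n \<le> real \<gamma> + \<alpha> * (real d - real m)"
proof -
  have "real d - real m > 0" using assms by simp
  with alpha_ge[OF assms] show ?thesis by (simp add: field_simps)
qed

lemma escape_radius: obtains Re where "Re \<ge> 1" "\<And>x. norm x \<ge> Re \<Longrightarrow> norm (poly p x) \<ge> 2 * norm x"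
proof -
  define S where "S = (\<Sum>i<\<delta>. norm (coeff p i))"
  have S0: "S \<ge> 0" by (simp add: S_def sum_nonneg)
  show ?thesis
  proof (rule that[of "S + 2"])
    show "1 \<le> S + 2" using S0 by simp
    fix x :: complex assume x: "norm x \<ge> S + 2"
    have x1: "norm x \<ge> 1" using x S0 by simp
    have mb: "norm (poly p x - x^\<delta>) \<le> S * norm x ^ (\<delta>-1)"
      using monic_bound[OF p_monic p_deg _ x1] \<delta>_ge by (simp add: S_def)
    have "norm (x^\<delta>) - norm (poly p x - x^\<delta>) \<le> norm (poly p x)"
      by (metis add_diff_cancel_left' norm_diff_ineq diff_add_cancel add.commute)
    hence "norm x ^ \<delta> - S * norm x ^ (\<delta>-1) \<le> norm (poly p x)" using mb by (simp add: norm_power)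
    moreover have "norm x ^ \<delta> = norm x ^ (\<delta>-1) * norm x" using \<delta>_ge
      by (metis One_nat_def Suc_diff_le Suc_le_lessD less_imp_le_nat one_le_numeral order.trans power_Suc2 diff_Suc_1)
    ultimately have "norm x ^ (\<delta>-1) * (norm x - S) \<le> norm (poly p x)" by (simp add: algebra_simps)
    moreover have "norm x ^ (\<delta>-1) * (norm x - S) \<ge> norm x * 2"
    proof (rule mult_mono)
      show "norm x \<le> norm x ^ (\<delta>-1)" using x1 \<delta>_ge
        by (intro self_le_power) auto
    qed (use x x1 in auto)
    ultimately show "norm (poly p x) \<ge> 2 * norm x" by simp
  qed
qed

lemma b_lower: obtains Rb where "Rb \<ge> 1" "\<And>z. norm z \<ge> Rb \<Longrightarrow> norm (poly (lead_coeff q) z) \<ge> norm z ^ \<gamma> / 2"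
proof -
  define S where "S = (\<Sum>i<\<gamma>. norm (coeff (lead_coeff q) i))"
  have S0: "S \<ge> 0" by (simp add: S_def sum_nonneg)
  show ?thesis
  proof (rule that[of "2 * S + 1"])
    show "1 \<le> 2 * S + 1" using S0 by simp
    fix x :: complex assume x: "norm x \<ge> 2 * S + 1"
    have x1: "norm x \<ge> 1" using x S0 by simp
    have mb: "norm (poly (lead_coeff q) x - x^\<gamma>) \<le> S * norm x ^ (\<gamma>-1)"
      using monic_bound[OF b_monic b_deg _ x1] \<gamma>_ge by (simp add: S_def)
    have "norm (x^\<gamma>) - norm (poly (lead_coeff q) x - x^\<gamma>) \<le> norm (poly (lead_coeff q) x)"
      by (metis add_diff_cancel_left' norm_diff_ineq diff_add_cancel add.commute)
    hence le: "norm x ^ \<gamma> - S * norm x ^ (\<gamma>-1) \<le> norm (poly (lead_coeff q) x)" using mb by (simp add: norm_power)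
    have eq: "norm x ^ \<gamma> = norm x ^ (\<gamma>-1) * norm x" using \<gamma>_ge
      by (metis Suc_diff_le diff_Suc_1 power_Suc2 One_nat_def)
    have "S * norm x ^ (\<gamma>-1) \<le> (norm x / 2) * norm x ^ (\<gamma>-1)"
      using x by (intro mult_right_mono) auto
    also have "\<dots> = norm x ^ \<gamma> / 2" using eq by simp
    finally show "norm (poly (lead_coeff q) x) \<ge> norm x ^ \<gamma> / 2" using le by simp
  qed
qed

end



context setting begin

lemma V_lower: obtains R0 R where "R0 \<ge> 1" "R \<ge> 1"
  "\<And>z w. norm z \<ge> R0 \<Longrightarrow> norm w \<ge> R * norm z powr \<alpha> \<Longrightarrow> norm (evalq q z w) \<ge> norm w ^ d / 4"
proof -
  obtain Rb where Rb: "Rb \<ge> 1" "\<And>z. norm z \<ge> Rb \<Longrightarrow> norm (poly (lead_coeff q) z) \<ge> norm z ^ \<gamma> / 2"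
    using b_lower by blast
  define Sl where "Sl = (\<Sum>m<d. \<Sum>n\<le>qE q. norm (coeff (coeff q m) n))"
  have Sl0: "Sl \<ge> 0" unfolding Sl_def by (intro sum_nonneg) auto
  define R where "R = 4 * Sl + 1"
  have R1: "R \<ge> 1" using Sl0 by (simp add: R_def)
  show ?thesis
  proof (rule that[OF Rb(1) R1])
    fix z w :: complex assume z: "norm z \<ge> Rb" and w: "norm w \<ge> R * norm z powr \<alpha>"
    have z1: "norm z \<ge> 1" using z Rb by simp
    define X where "X = norm z ^ \<gamma> * norm w ^ d"
    have X0: "X \<ge> 0" by (simp add: X_def)
    have zg: "norm z powr real \<gamma> = norm z ^ \<gamma>" using z1 by (intro powr_realpow) linarith
    have tb: "norm (coeff (coeff q m) n) * (norm z ^ n * norm w ^ m) \<le> norm (coeff (coeff q m) n) * (X / R)"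
      if m: "m < d" for m n
    proof (cases "coeff (coeff q m) n = 0")
      case False
      have "norm z ^ n * norm w ^ m \<le> (norm z powr real \<gamma> * norm w ^ d) / R"
        by (rule term_bound[OF z1 R1 w m alpha_ge'[OF False m]]) simp
      thus ?thesis by (intro mult_left_mono) (auto simp: X_def zg)
    qed simp
    have lowsum: "norm (\<Sum>m<d. poly (coeff q m) z * w^m) \<le> Sl / R * X"
    proof -
      have "norm (\<Sum>m<d. poly (coeff q m) z * w^m) \<le> (\<Sum>m<d. norm (poly (coeff q m) z) * norm w ^ m)"
        by (rule order.trans[OF norm_sum]) (simp add: norm_mult norm_power)
      also have "\<dots> \<le> (\<Sum>m<d. \<Sum>n\<le>qE q. norm (coeff (coeff q m) n) * (norm z ^ n * norm w ^ m))"
      proof (rule sum_mono)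
        fix m assume m: "m \<in> {..<d}"
        have dm: "degree (coeff q m) \<le> qE q" unfolding qE_def using m q_deg by (intro member_le_sum) auto
        have "norm (poly (coeff q m) z) = norm (\<Sum>n\<le>qE q. coeff (coeff q m) n * z^n)"
          by (simp add: poly_sum_le_deg[OF dm])
        also have "\<dots> \<le> (\<Sum>n\<le>qE q. norm (coeff (coeff q m) n) * norm z ^ n)"
          by (rule order.trans[OF norm_sum]) (simp add: norm_mult norm_power)
        finally have "norm (poly (coeff q m) z) * norm w ^ m \<le> (\<Sum>n\<le>qE q. norm (coeff (coeff q m) n) * norm z ^ n) * norm w ^ m"
          by (intro mult_right_mono) auto
        thus "norm (poly (coeff q m) z) * norm w ^ m \<le> (\<Sum>n\<le>qE q. norm (coeff (coeff q m) n) * (norm z ^ n * norm w ^ m))"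
          by (simp add: sum_distrib_right mult.assoc)
      qed
      also have "\<dots> \<le> (\<Sum>m<d. \<Sum>n\<le>qE q. norm (coeff (coeff q m) n) * (X / R))"
        by (intro sum_mono tb) auto
      also have "\<dots> = Sl * (X / R)" by (simp add: Sl_def sum_distrib_right del: times_divide_eq_right)
      also have "\<dots> = Sl / R * X" by simp
      finally show ?thesis .
    qed
    have "Sl / R \<le> 1/4" using Sl0 by (simp add: R_def field_simps)
    hence "Sl / R * X \<le> 1/4 * X" using X0 by (rule mult_right_mono)
    hence low4: "norm (\<Sum>m<d. poly (coeff q m) z * w^m) \<le> X / 4" using lowsum by linarith
    have bz: "norm (poly (lead_coeff q) z * w^d) \<ge> X / 2"
    proof -
      have "norm z ^ \<gamma> / 2 * norm w ^ d \<le> norm (poly (lead_coeff q) z) * norm w ^ d"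
        using Rb(2)[OF z] by (intro mult_right_mono) auto
      thus ?thesis by (simp add: X_def norm_mult norm_power)
    qed
    have ev: "evalq q z w = (\<Sum>m<d. poly (coeff q m) z * w^m) + poly (lead_coeff q) z * w^d"
      unfolding evalq_sum q_deg by (simp add: lessThan_Suc_atMost[symmetric])
    have "poly (lead_coeff q) z * w^d = evalq q z w - (\<Sum>m<d. poly (coeff q m) z * w^m)" using ev by simp
    hence "norm (poly (lead_coeff q) z * w^d) \<le> norm (evalq q z w) + norm (\<Sum>m<d. poly (coeff q m) z * w^m)"
      by (metis norm_triangle_ineq4)
    hence "norm (evalq q z w) \<ge> X / 4" using bz low4 by linarith
    moreover have "1 * norm w ^ d \<le> norm z ^ \<gamma> * norm w ^ d" using z1
      by (intro mult_right_mono one_le_power) auto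
    hence "norm w ^ d \<le> X" by (simp add: X_def)
    ultimately show "norm (evalq q z w) \<ge> norm w ^ d / 4" by simp
  qed
qed

lemma L_lower4: assumes "x \<ge> y ^ d / 4" "y \<ge> 0" shows "logplus x \<ge> real d * logplus y - ln 4"
proof -
  have "logplus (y^d) \<le> logplus (y^d / 4) + logplus 4" using L_mult[of "y^d/4" 4] assms by simp
  moreover have "logplus 4 = ln 4" by (simp add: L_one_le)
  moreover have "logplus (y^d/4) \<le> logplus x" by (rule L_mono[OF assms(1)])
  ultimately show ?thesis using L_pow[OF assms(2), of d] by simp
qed

definition "TT c n k = c / ((real d - 1) * real d ^ n) + E * k * real \<delta> ^ n / ((real d - real \<delta>) * real d ^ n)"

lemma TT_diff: "TT c n k - TT c (Suc n) k = (c + E * k * real \<delta> ^ n) / real d ^ Suc n"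
proof -
  define D where "D = real d ^ n"
  have D: "D > 0" using d_pos by (simp add: D_def)
  have h1: "real d - 1 > 0" "real d - real \<delta> > 0" using d_pos \<delta>_lt by auto
  have "TT c n k - TT c (Suc n) k = c / ((real d - 1) * D) - c / ((real d - 1) * (real d * D))
     + ((E * k * real \<delta> ^ n) / ((real d - real \<delta>) * D) - (E * k * real \<delta> ^ n) * real \<delta> / ((real d - real \<delta>) * (real d * D)))"
    unfolding TT_def D_def by (simp add: algebra_simps)
  also have "c / ((real d - 1) * D) - c / ((real d - 1) * (real d * D)) = c / (real d * D)"
    using aux_div1[OF h1(1) D, of c] by simp
  also have "(E * k * real \<delta> ^ n) / ((real d - real \<delta>) * D) - (E * k * real \<delta> ^ n) * real \<delta> / ((real d - real \<delta>) * (real d * D))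
     = E * k * real \<delta> ^ n / (real d * D)"
    using aux_div2[OF h1(2) D, of "real \<delta>" "E * k * real \<delta> ^ n"] by simp
  finally show ?thesis by (simp add: D_def add_divide_distrib)
qed

lemma TT_nonneg: "c \<ge> 0 \<Longrightarrow> k \<ge> 0 \<Longrightarrow> TT c n k \<ge> 0"
  using d_pos \<delta>_lt E_nonneg unfolding TT_def
  by (intro add_nonneg_nonneg divide_nonneg_pos mult_nonneg_nonneg) auto

lemma TT_lim: "(\<lambda>n. TT c n k) \<longlonglongrightarrow> 0"
proof -
  have a: "(\<lambda>n. (1 / real d) ^ n) \<longlonglongrightarrow> 0" using d_pos by (intro LIMSEQ_power_zero) auto
  have b: "(\<lambda>n. (real \<delta> / real d) ^ n) \<longlonglongrightarrow> 0" using d_pos \<delta>_lt by (intro LIMSEQ_power_zero) auto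
  have "(\<lambda>n. c / (real d - 1) * (1 / real d) ^ n + E * k / (real d - real \<delta>) * (real \<delta> / real d) ^ n) \<longlonglongrightarrow> c / (real d - 1) * 0 + E * k / (real d - real \<delta>) * 0"
    by (intro tendsto_intros a b)
  moreover have "\<And>n. TT c n k = c / (real d - 1) * (1 / real d) ^ n + E * k / (real d - real \<delta>) * (real \<delta> / real d) ^ n"
    unfolding TT_def by (simp add: field_simps power_divide)
  ultimately show ?thesis by simp
qed

end



context setting begin

definition "eta R n k = (ln R + max \<alpha> 0 * real \<delta> ^ n * k) / real d ^ n"

lemma F_step_lower:
  assumes V: "\<And>z w. norm z \<ge> R0 \<Longrightarrow> norm w \<ge> R * norm z powr \<alpha> \<Longrightarrow> norm (evalq q z w) \<ge> norm w ^ d / 4"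
    and j: "norm (zs j z) \<ge> R0" "norm (Qit p q j z w) \<ge> R * norm (zs j z) powr \<alpha>"
  shows "F (Suc j) z w \<ge> F j z w - ln 4 / real d ^ Suc j"
proof -
  have "A (Suc j) z w \<ge> real d * A j z w - ln 4"
    unfolding A_def Qit_Suc by (rule L_lower4[OF V[OF j]]) simp
  hence "A (Suc j) z w / real d ^ Suc j \<ge> (real d * A j z w - ln 4) / real d ^ Suc j"
    using d_pos by (intro divide_right_mono) auto
  thus ?thesis unfolding F_def using d_pos by (simp add: field_simps)
qed

lemma L_powr_le: assumes "x \<ge> 1" shows "logplus (x powr a) \<le> max a 0 * logplus x"
proof (cases "a \<le> 0")
  case True
  have "x powr a \<le> x powr 0" using assms True by (intro powr_mono) auto
  hence "x powr a \<le> 1" using assms by simp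
  thus ?thesis using True by (simp add: logplus_def)
next
  case False
  have "logplus (x powr a) \<le> a * logplus x" using L_rpow(2)[of x a] assms False by (simp add: rpow_def)
  thus ?thesis using False by simp
qed

lemma F_small:
  assumes R1: "R \<ge> 1" and z1: "norm (zs j z) \<ge> 1" and w: "norm (Qit p q j z w) < R * norm (zs j z) powr \<alpha>"
    and k: "K z \<le> k"
  shows "F j z w \<le> eta R j k"
proof -
  have "A j z w \<le> logplus (R * norm (zs j z) powr \<alpha>)" unfolding A_def using w by (intro L_mono) auto
  also have "\<dots> \<le> logplus R + logplus (norm (zs j z) powr \<alpha>)" using R1 by (intro L_mult) auto
  also have "\<dots> \<le> ln R + max \<alpha> 0 * logplus (norm (zs j z))"
    using L_powr_le[OF z1, of \<alpha>] R1 by (simp add: L_one_le)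
  also have "\<dots> \<le> ln R + max \<alpha> 0 * (real \<delta> ^ j * k)"
    using Lz[of j z] k by (intro add_left_mono mult_left_mono order.trans[OF _ mult_left_mono[of "K z" k]]) auto
  finally show ?thesis unfolding F_def eta_def using d_pos by (intro divide_right_mono) (auto simp: mult.assoc)
qed

lemma eta_mono: assumes "R \<ge> 1" "k \<ge> 0" "m \<le> j" shows "eta R j k \<le> eta R m k"
proof -
  have a: "ln R / real d ^ j \<le> ln R / real d ^ m" using assms d_pos
    by (intro divide_left_mono mult_pos_pos power_increasing) auto
  have "(real \<delta> / real d) ^ j \<le> (real \<delta> / real d) ^ m" using assms d_pos \<delta>_lt
    by (intro power_decreasing) auto
  hence b: "max \<alpha> 0 * k * (real \<delta> / real d) ^ j \<le> max \<alpha> 0 * k * (real \<delta> / real d) ^ m"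
    using assms by (intro mult_left_mono) auto
  show ?thesis using a b unfolding eta_def by (simp add: add_divide_distrib power_divide mult_ac)
qed

lemma eta_nonneg: "R \<ge> 1 \<Longrightarrow> k \<ge> 0 \<Longrightarrow> eta R n k \<ge> 0"
  unfolding eta_def using d_pos by (intro divide_nonneg_pos add_nonneg_nonneg mult_nonneg_nonneg) auto

lemma eta_lim: "(\<lambda>n. eta R n k) \<longlonglongrightarrow> 0"
proof -
  have a: "(\<lambda>n. (1 / real d) ^ n) \<longlonglongrightarrow> 0" using d_pos by (intro LIMSEQ_power_zero) auto
  have b: "(\<lambda>n. (real \<delta> / real d) ^ n) \<longlonglongrightarrow> 0" using d_pos \<delta>_lt by (intro LIMSEQ_power_zero) auto
  have "(\<lambda>n. ln R * (1 / real d) ^ n + max \<alpha> 0 * k * (real \<delta> / real d) ^ n) \<longlonglongrightarrow> ln R * 0 + max \<alpha> 0 * k * 0"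
    by (intro tendsto_intros a b)
  moreover have "\<And>n. eta R n k = ln R * (1 / real d) ^ n + max \<alpha> 0 * k * (real \<delta> / real d) ^ n"
    unfolding eta_def by (simp add: add_divide_distrib power_divide mult_ac)
  ultimately show ?thesis by simp
qed

lemma unif:
  assumes V: "\<And>z w. norm z \<ge> R0 \<Longrightarrow> norm w \<ge> R * norm z powr \<alpha> \<Longrightarrow> norm (evalq q z w) \<ge> norm w ^ d / 4"
    and R01: "R0 \<ge> 1" and R1: "R \<ge> 1" and k: "K z \<le> k"
    and N: "\<And>j. j \<ge> N \<Longrightarrow> norm (zs j z) \<ge> R0" and m: "N \<le> m"
  shows "\<bar>F m z w - G z w\<bar> \<le> TT (Cq + ln 4) m k + eta R m k"
proof -
  define c where "c = Cq + ln 4"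
  have c0: "c \<ge> 0" using Cq_nonneg by (simp add: c_def)
  have k0: "k \<ge> 0" using k K_nonneg[of z] by linarith
  define e where "e j = TT c j k - TT c (Suc j) k" for j
  have e_eq: "e j = (c + E * k * real \<delta> ^ j) / real d ^ Suc j" for j
    unfolding e_def by (rule TT_diff)
  have e0: "e j \<ge> 0" for j unfolding e_eq using c0 k0 E_nonneg d_pos
    by (intro divide_nonneg_pos add_nonneg_nonneg mult_nonneg_nonneg) auto
  have up: "F (Suc j) z w \<le> F j z w + e j" for j
  proof -
    have "E * real \<delta> ^ j * K z \<le> E * real \<delta> ^ j * k" using k E_nonneg by (intro mult_left_mono) auto
    hence h: "E * real \<delta> ^ j * K z \<le> E * k * real \<delta> ^ j" by (simp add: mult_ac)
    have "ln (4::real) \<ge> 0" by simp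
    hence "Cq + E * real \<delta> ^ j * K z \<le> c + E * k * real \<delta> ^ j" unfolding c_def using h by linarith
    hence "(Cq + E * real \<delta> ^ j * K z) / real d ^ Suc j \<le> e j" unfolding e_eq
      using d_pos by (intro divide_right_mono) auto
    thus ?thesis using F_step_gen[of j z w] by linarith
  qed
  have inV: "F (Suc j) z w \<ge> F j z w - e j" if "j \<ge> N" "norm (Qit p q j z w) \<ge> R * norm (zs j z) powr \<alpha>" for j
  proof -
    have "ln 4 / real d ^ Suc j \<le> e j" unfolding e_eq c_def using d_pos Cq_nonneg k0 E_nonneg
      by (intro divide_right_mono) auto
    thus ?thesis using F_step_lower[OF V N[OF that(1)] that(2)] by linarith
  qed
  have notV: "F j z w \<le> eta R m k" if "j \<ge> N" "m \<le> j" "\<not> norm (Qit p q j z w) \<ge> R * norm (zs j z) powr \<alpha>" for j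
  proof -
    have "F j z w \<le> eta R j k" using R01 N[OF that(1)] that(3) by (intro F_small[OF R1 _ _ k]) auto
    also have "\<dots> \<le> eta R m k" using R1 k0 that(2) by (rule eta_mono)
    finally show ?thesis .
  qed
  define S where "S i = TT c m k - TT c (m + i) k" for i
  have S_Suc: "S (Suc i) = S i + e (m + i)" for i unfolding S_def e_def by simp
  have S0: "S i \<ge> 0" for i
  proof (induction i)
    case 0 thus ?case by (simp add: S_def)
  next
    case (Suc i) thus ?case using e0 by (simp add: S_Suc)
  qed
  have Sle: "S i \<le> TT c m k" for i using TT_nonneg[OF c0 k0] by (simp add: S_def)
  have upper: "F (m + i) z w \<le> F m z w + S i" for i
  proof (induction i)
    case 0 thus ?case by (simp add: S_def)
  next
    case (Suc i) thus ?case using up[of "m+i"] by (simp add: S_Suc)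
  qed
  have Q: "F (m + i) z w \<ge> F m z w - S i \<or> F m z w \<le> eta R m k + S i" for i
  proof (induction i)
    case 0 thus ?case by (simp add: S_def)
  next
    case (Suc i)
    show ?case
    proof (cases "norm (Qit p q (m+i) z w) \<ge> R * norm (zs (m+i) z) powr \<alpha>")
      case True
      have "F (Suc (m+i)) z w \<ge> F (m+i) z w - e (m+i)" using m True by (intro inV) auto
      thus ?thesis using Suc e0[of "m+i"] by (auto simp: S_Suc)
    next
      case False
      have "F (m+i) z w \<le> eta R m k" using m False by (intro notV) auto
      thus ?thesis using Suc e0[of "m+i"] by (auto simp: S_Suc)
    qed
  qed
  have bound: "\<bar>F (m + i) z w - F m z w\<bar> \<le> TT c m k + eta R m k" for i
    using Q[of i] upper[of i] Sle[of i] S0[of i] F_nonneg[of "m+i" z w] eta_nonneg[OF R1 k0, of m]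
    by (auto simp: abs_le_iff)
  have lim: "(\<lambda>i. \<bar>F (m + i) z w - F m z w\<bar>) \<longlonglongrightarrow> \<bar>G z w - F m z w\<bar>"
  proof (intro tendsto_intros)
    show "(\<lambda>i. F (m + i) z w) \<longlonglongrightarrow> G z w"
      using LIMSEQ_ignore_initial_segment[OF F_lim, of m] by (simp add: add.commute)
  qed
  have "\<bar>G z w - F m z w\<bar> \<le> TT c m k + eta R m k"
    by (rule LIMSEQ_le_const2[OF lim]) (use bound in auto)
  thus ?thesis by (simp add: c_def abs_minus_commute)
qed

end



context setting begin

lemma cont_zs: "continuous_on S f \<Longrightarrow> continuous_on S (\<lambda>x. zs n (f x))"
  by (induction n) (auto simp: zs_0 zs_Suc intro!: continuous_intros)

lemma cont_Qit: "continuous_on S f \<Longrightarrow> continuous_on S g \<Longrightarrow> continuous_on S (\<lambda>x. Qit p q n (f x) (g x))"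
proof (induction n)
  case 0 thus ?case by simp
next
  case (Suc n)
  show ?case unfolding Qit_Suc evalq_sum
    by (intro continuous_intros cont_zs Suc)
qed

lemma cont_F: "continuous_on S (\<lambda>x. F n (fst x) (snd x))"
  unfolding F_def A_def
  using d_ge by (intro continuous_intros continuous_on_compose2[OF L_cont] cont_Qit) auto

lemma zs_add: "zs (j + N) z = zs j (zs N z)"
  by (simp add: zs_def funpow_add)

lemma grow: assumes Rs: "\<And>x. norm x \<ge> Rs \<Longrightarrow> norm (poly p x) \<ge> 2 * norm x" and Rs1: "Rs \<ge> 1"
  and x: "norm x \<ge> Rs" shows "norm (zs j x) \<ge> 2 ^ j * norm x"
proof (induction j)
  case 0 thus ?case by (simp add: zs_0)
next
  case (Suc j)
  have "norm (zs j x) \<ge> Rs"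
    using Suc x Rs1 by (smt (verit, ccfv_SIG) mult_le_cancel_right1 norm_ge_zero one_le_power one_le_numeral)
  hence "norm (zs (Suc j) x) \<ge> 2 * norm (zs j x)" unfolding zs_Suc by (rule Rs)
  thus ?case using Suc by simp
qed

lemma grow': assumes Rs: "\<And>x. norm x \<ge> Rs \<Longrightarrow> norm (poly p x) \<ge> 2 * norm x" and Rs1: "Rs \<ge> 1"
  and x: "norm (zs N z) \<ge> Rs" and j: "j \<ge> N" shows "norm (zs j z) \<ge> 2 ^ (j - N) * Rs" "norm (zs j z) \<ge> Rs"
proof -
  have "zs j z = zs (j - N) (zs N z)" using zs_add[of "j - N" N z] j by simp
  hence "norm (zs j z) \<ge> 2 ^ (j - N) * norm (zs N z)" using grow[OF Rs Rs1 x] by simp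
  moreover have "2 ^ (j - N) * norm (zs N z) \<ge> 2 ^ (j - N) * Rs" using x by simp
  ultimately show "norm (zs j z) \<ge> 2 ^ (j - N) * Rs" by linarith
  moreover have "2 ^ (j - N) * Rs \<ge> Rs" using Rs1 by simp
  ultimately show "norm (zs j z) \<ge> Rs" by linarith
qed

lemma escape_iff: assumes Rs: "\<And>x. norm x \<ge> Rs \<Longrightarrow> norm (poly p x) \<ge> 2 * norm x" and Rs1: "Rs \<ge> 1"
  shows "z \<in> escape_set p \<longleftrightarrow> (\<exists>N. norm (zs N z) > Rs)"
proof
  assume "z \<in> escape_set p"
  hence "filterlim (\<lambda>n. zs n z) at_infinity sequentially" by (simp add: escape_set_def zs_def)
  hence "filterlim (\<lambda>n. norm (zs n z)) at_top sequentially" by (rule filterlim_at_infinity_imp_norm_at_top)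
  hence "eventually (\<lambda>n. Rs + 1 \<le> norm (zs n z)) sequentially" by (simp add: filterlim_at_top)
  then obtain N where "Rs + 1 \<le> norm (zs N z)" by (auto simp: eventually_sequentially)
  thus "\<exists>N. norm (zs N z) > Rs" by (intro exI[of _ N]) simp
next
  assume "\<exists>N. norm (zs N z) > Rs"
  then obtain N where N: "norm (zs N z) > Rs" by blast
  have "filterlim (\<lambda>n. norm (zs n z)) at_top sequentially"
    unfolding filterlim_at_top
  proof
    fix Z :: real
    obtain j where j: "Z < 2 ^ j" using real_arch_pow[of 2 Z] by auto
    show "eventually (\<lambda>n. Z \<le> norm (zs n z)) sequentially"
      unfolding eventually_sequentially
    proof (intro exI[of _ "N + j"] allI impI)
      fix n assume n: "N + j \<le> n"
      have "norm (zs n z) \<ge> 2 ^ (n - N) * Rs" using N n by (intro grow'(1)[OF Rs Rs1]) auto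
      moreover have "2 ^ (n - N) * Rs \<ge> (2::real) ^ j * 1"
        using n Rs1 by (intro mult_mono power_increasing) auto
      ultimately show "Z \<le> norm (zs n z)" using j by simp
    qed
  qed
  hence "filterlim (\<lambda>n. zs n z) at_infinity sequentially" by (rule filterlim_norm_at_top_imp_at_infinity)
  thus "z \<in> escape_set p" by (simp add: escape_set_def zs_def)
qed

lemma open_escape: "open (escape_set p)"
proof -
  obtain Rs where Rs: "Rs \<ge> 1" "\<And>x. norm x \<ge> Rs \<Longrightarrow> norm (poly p x) \<ge> 2 * norm x"
    using escape_radius by blast
  have "escape_set p = (\<Union>N. {z. norm (zs N z) > Rs})" using escape_iff[OF Rs(2) Rs(1)] by auto
  also have "open \<dots>"
    by (intro open_UN ballI open_Collect_less continuous_intros cont_zs)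
  finally show ?thesis .
qed

end



context setting begin

lemma local_unif: assumes z0: "z0 \<in> escape_set p"
  obtains U N Bd where "open U" "z0 \<in> U" "U \<subseteq> escape_set p" "Bd \<longlonglongrightarrow> 0"
    "\<And>m z w. m \<ge> N \<Longrightarrow> z \<in> U \<Longrightarrow> \<bar>F m z w - G z w\<bar> \<le> Bd m"
proof -
  obtain R0 R where R0: "R0 \<ge> 1" and R: "R \<ge> 1"
    and V: "\<And>z w. norm z \<ge> R0 \<Longrightarrow> norm w \<ge> R * norm z powr \<alpha> \<Longrightarrow> norm (evalq q z w) \<ge> norm w ^ d / 4"
    using V_lower by blast
  obtain Rs where Rs: "Rs \<ge> 1" "\<And>x. norm x \<ge> Rs \<Longrightarrow> norm (poly p x) \<ge> 2 * norm x"
    using escape_radius by blast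
  define R1 where "R1 = max R0 Rs"
  have R1: "R1 \<ge> 1" "R1 \<ge> R0" "R1 \<ge> Rs" using R0 by (auto simp: R1_def)
  have gr: "norm x \<ge> R1 \<Longrightarrow> norm (poly p x) \<ge> 2 * norm x" for x using Rs(2)[of x] R1 by auto
  obtain N where N: "norm (zs N z0) > R1" using escape_iff[OF gr R1(1)] z0 by blast
  define U where "U = ball z0 1 \<inter> {z. norm (zs N z) > R1}"
  have oU: "open U" unfolding U_def
    by (intro open_Int open_ball open_Collect_less continuous_intros cont_zs)
  have z0U: "z0 \<in> U" using N by (simp add: U_def)
  have Uesc: "U \<subseteq> escape_set p" using escape_iff[OF gr R1(1)] by (auto simp: U_def)
  define k where "k = logplus (norm z0 + 1) + Cp"
  define Bd where "Bd m = TT (Cq + ln 4) m k + eta R m k" for m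
  have Bd: "Bd \<longlonglongrightarrow> 0" unfolding Bd_def using tendsto_add[OF TT_lim eta_lim] by simp
  show ?thesis
  proof (rule that[OF oU z0U Uesc Bd])
    fix m z w assume m: "N \<le> m" and z: "z \<in> U"
    have "norm z \<le> norm z0 + 1" using z norm_triangle_sub[of z z0]
      by (auto simp: U_def dist_norm norm_minus_commute)
    hence Kz: "K z \<le> k" unfolding K_def k_def by (simp add: L_mono)
    have zj: "norm (zs j z) \<ge> R0" if "j \<ge> N" for j
    proof -
      have "norm (zs N z) \<ge> R1" using z by (simp add: U_def)
      hence "norm (zs j z) \<ge> R1" using grow'(2)[OF gr R1(1) _ that] by blast
      thus ?thesis using R1 by simp
    qed
    show "\<bar>F m z w - G z w\<bar> \<le> Bd m" unfolding Bd_def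
      by (rule unif[OF V R0 R Kz zj m])
  qed
qed

lemma unif_lim_local:
  assumes "Bd \<longlonglongrightarrow> 0" "\<And>m x. m \<ge> N \<Longrightarrow> x \<in> S \<Longrightarrow> \<bar>F m (fst x) (snd x) - G (fst x) (snd x)\<bar> \<le> Bd m"
  shows "uniform_limit S (\<lambda>m x. F m (fst x) (snd x)) (\<lambda>x. G (fst x) (snd x)) sequentially"
proof (rule uniform_limitI)
  fix e :: real assume e: "e > 0"
  have "eventually (\<lambda>m. Bd m < e) sequentially" using order_tendstoD(2)[OF assms(1) e] .
  moreover have "eventually (\<lambda>m. m \<ge> N) sequentially" by (rule eventually_ge_at_top)
  ultimately show "eventually (\<lambda>m. \<forall>x\<in>S. dist (F m (fst x) (snd x)) (G (fst x) (snd x)) < e) sequentially"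
  proof eventually_elim
    case (elim m)
    show ?case using assms(2)[of m] elim by (auto simp: dist_real_def intro: le_less_trans)
  qed
qed

lemma cont_G: "continuous_on (escape_set p \<times> UNIV) (\<lambda>(z, w). G z w)"
proof -
  have "isCont (\<lambda>x. G (fst x) (snd x)) x" if x: "x \<in> escape_set p \<times> UNIV" for x
  proof -
    have fx: "fst x \<in> escape_set p" using x by auto
    obtain U Bd N where U: "open U" "fst x \<in> U" "U \<subseteq> escape_set p" "Bd \<longlonglongrightarrow> 0"
      and b: "\<And>m z w. m \<ge> N \<Longrightarrow> z \<in> U \<Longrightarrow> \<bar>F m z w - G z w\<bar> \<le> Bd m"
      by (rule local_unif[OF fx]) blast
    have ul: "uniform_limit (U \<times> UNIV) (\<lambda>m x. F m (fst x) (snd x)) (\<lambda>x. G (fst x) (snd x)) sequentially"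
      by (rule unif_lim_local[OF U(4)]) (use b in auto)
    have c: "continuous_on (U \<times> UNIV) (\<lambda>x. G (fst x) (snd x))"
      by (rule uniform_limit_theorem[OF _ ul]) (auto intro!: always_eventually cont_F)
    have o: "open (U \<times> (UNIV :: complex set))" using U(1) by (intro open_Times) auto
    have xin: "x \<in> U \<times> UNIV" using U(2) by (cases x) auto
    have "\<forall>y\<in>U \<times> UNIV. isCont (\<lambda>x. G (fst x) (snd x)) y"
      using c continuous_on_eq_continuous_at[OF o, of "\<lambda>x. G (fst x) (snd x)"] by blast
    thus ?thesis using xin by blast
  qed
  hence "continuous_on (escape_set p \<times> UNIV) (\<lambda>x. G (fst x) (snd x))"
    by (intro continuous_at_imp_continuous_on) auto
  thus ?thesis by (simp add: case_prod_beta')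
qed

end



context setting begin

lemma Gf_lim: "(\<lambda>n. logplus (max (cmod ((poly p ^^ n) z)) (cmod (Qit p q n z w))) / real d ^ n) \<longlonglongrightarrow> G z w"
proof -
  have eq: "logplus (max (cmod ((poly p ^^ n) z)) (cmod (Qit p q n z w))) / real d ^ n
      = max (logplus (norm (zs n z)) / real d ^ n) (F n z w)" for n
    by (simp add: L_max max_divide_distrib_right zs_def F_def A_def)
  have "(\<lambda>n. max (logplus (norm (zs n z)) / real d ^ n) (F n z w)) \<longlonglongrightarrow> max 0 (G z w)"
    by (intro tendsto_max zs_ratio_lim F_lim)
  thus ?thesis unfolding eq using G_nonneg by (simp add: max_absorb2)
qed

lemma Gfa_lim: "(\<lambda>n. logplus (max (rpow (cmod ((poly p ^^ n) z)) (max \<alpha> 0)) (cmod (Qit p q n z w))) / real d ^ n) \<longlonglongrightarrow> G z w"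
proof -
  have eq: "logplus (max (rpow (cmod ((poly p ^^ n) z)) (max \<alpha> 0)) (cmod (Qit p q n z w))) / real d ^ n
      = max (logplus (rpow (norm (zs n z)) (max \<alpha> 0)) / real d ^ n) (F n z w)" for n
    by (simp add: L_max max_divide_distrib_right zs_def F_def A_def)
  have z: "(\<lambda>n. logplus (rpow (norm (zs n z)) (max \<alpha> 0)) / real d ^ n) \<longlonglongrightarrow> 0"
  proof (rule tendsto_sandwich[of "\<lambda>_. 0" _ _ "\<lambda>n. max \<alpha> 0 * (logplus (norm (zs n z)) / real d ^ n)"])
    show "\<forall>\<^sub>F n in sequentially. 0 \<le> logplus (rpow (norm (zs n z)) (max \<alpha> 0)) / real d ^ n"
      by (simp add: L_nonneg)
    show "\<forall>\<^sub>F n in sequentially. logplus (rpow (norm (zs n z)) (max \<alpha> 0)) / real d ^ n \<le> max \<alpha> 0 * (logplus (norm (zs n z)) / real d ^ n)"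
    proof (intro always_eventually allI)
      fix n
      have "logplus (rpow (norm (zs n z)) (max \<alpha> 0)) \<le> max \<alpha> 0 * logplus (norm (zs n z))"
        by (rule L_rpow(2)) auto
      thus "logplus (rpow (norm (zs n z)) (max \<alpha> 0)) / real d ^ n \<le> max \<alpha> 0 * (logplus (norm (zs n z)) / real d ^ n)"
        using d_pos by (simp add: divide_right_mono)
    qed
    show "(\<lambda>n. max \<alpha> 0 * (logplus (norm (zs n z)) / real d ^ n)) \<longlonglongrightarrow> 0"
      using tendsto_mult_left[OF zs_ratio_lim, of "max \<alpha> 0" z] by simp
  qed simp
  have "(\<lambda>n. max (logplus (rpow (norm (zs n z)) (max \<alpha> 0)) / real d ^ n) (F n z w)) \<longlonglongrightarrow> max 0 (G z w)"
    by (intro tendsto_max z F_lim)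
  thus ?thesis unfolding eq using G_nonneg by (simp add: max_absorb2)
qed

lemma Ga_lim: assumes z: "z \<in> escape_set p"
  shows "(\<lambda>n. logplus (cmod (Qit p q n z w) / rpow (cmod ((poly p ^^ n) z)) \<alpha>) / real d ^ n) \<longlonglongrightarrow> G z w"
proof -
  obtain Rs where Rs: "Rs \<ge> 1" "\<And>x. norm x \<ge> Rs \<Longrightarrow> norm (poly p x) \<ge> 2 * norm x"
    using escape_radius by blast
  obtain N where N: "norm (zs N z) > Rs" using escape_iff[OF Rs(2) Rs(1)] z by blast
  have z1: "norm (zs n z) \<ge> 1" if "n \<ge> N" for n
  proof -
    have "norm (zs n z) \<ge> Rs" by (rule grow'(2)[where Rs=Rs and N=N, OF Rs(2) Rs(1)]) (use N that in auto)
    thus ?thesis using Rs(1) by linarith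
  qed
  define X where "X n = logplus (cmod (Qit p q n z w) / rpow (cmod ((poly p ^^ n) z)) \<alpha>) / real d ^ n" for n
  define B where "B n = \<bar>\<alpha>\<bar> * (logplus (norm (zs n z)) / real d ^ n)" for n
  have diff: "\<bar>X n - F n z w\<bar> \<le> B n" if n: "n \<ge> N" for n
  proof -
    let ?x = "norm (zs n z)"
    have x1: "?x \<ge> 1" using z1[OF n] .
    have lr: "ln (rpow ?x \<alpha>) = \<alpha> * logplus ?x"
      using x1 by (auto simp: rpow_def ln_powr L_one_le)
    have rp: "rpow ?x \<alpha> > 0" using x1 by (auto simp: rpow_def)
    have "\<bar>logplus (cmod (Qit p q n z w) / rpow ?x \<alpha>) - A n z w\<bar> \<le> \<bar>ln (rpow ?x \<alpha>)\<bar>"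
      unfolding A_def by (rule L_div[OF _ rp]) simp
    also have "\<dots> = \<bar>\<alpha>\<bar> * logplus ?x" by (simp add: lr abs_mult L_nonneg)
    finally have "\<bar>logplus (cmod (Qit p q n z w) / rpow ?x \<alpha>) - A n z w\<bar> / real d ^ n \<le> \<bar>\<alpha>\<bar> * logplus ?x / real d ^ n"
      using d_pos by (intro divide_right_mono) auto
    thus ?thesis unfolding X_def B_def F_def zs_def using d_pos
      by (simp add: diff_divide_distrib[symmetric] abs_divide)
  qed
  have B0: "B \<longlonglongrightarrow> 0" unfolding B_def using tendsto_mult_left[OF zs_ratio_lim, of "\<bar>\<alpha>\<bar>" z] by simp
  have "(\<lambda>n. X n - F n z w) \<longlonglongrightarrow> 0"
  proof (rule tendsto_sandwich[of "\<lambda>n. - B n" _ _ B])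
    show "\<forall>\<^sub>F n in sequentially. - B n \<le> X n - F n z w"
      unfolding eventually_sequentially
    proof (intro exI[of _ N] allI impI)
      fix n assume "N \<le> n" from diff[OF this] show "- B n \<le> X n - F n z w" by linarith
    qed
    show "\<forall>\<^sub>F n in sequentially. X n - F n z w \<le> B n"
      using diff by (auto simp: eventually_sequentially abs_le_iff intro!: exI[of _ N])
    show "(\<lambda>n. - B n) \<longlonglongrightarrow> 0" using tendsto_minus[OF B0] by simp
  qed (rule B0)
  hence "(\<lambda>n. F n z w + (X n - F n z w)) \<longlonglongrightarrow> G z w + 0" by (intro tendsto_add F_lim)
  thus ?thesis unfolding X_def by simp
qed

end



lemma int_Re_cis: fixes C :: complex and k :: nat assumes k: "k \<ge> 1"
  shows "((\<lambda>t. Re (C * cis (real k * t))) has_integral 0) {0..2*pi}"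
proof -
  define g where "g t = (Re C * sin (real k * t) + Im C * cos (real k * t)) / real k" for t
  have der: "(g has_vector_derivative Re (C * cis (real k * t))) (at t within {0..2*pi})" for t
  proof -
    have "(g has_real_derivative (Re C * (cos (real k * t) * real k) + Im C * (- sin (real k * t) * real k)) / real k) (at t within {0..2*pi})"
      unfolding g_def using k by (intro derivative_eq_intros) auto
    moreover have "(Re C * (cos (real k * t) * real k) + Im C * (- sin (real k * t) * real k)) / real k = Re (C * cis (real k * t))"
      using k by (simp add: field_simps cis.code)
    ultimately show ?thesis by (simp add: has_real_derivative_iff_has_vector_derivative)
  qed
  have "((\<lambda>t. Re (C * cis (real k * t))) has_integral g (2*pi) - g 0) {0..2*pi}"
    by (rule fundamental_theorem_of_calculus) (simp, rule der)
  moreover have "g (2*pi) = g 0"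
  proof -
    have "sin (real k * (2*pi)) = 0" by (metis sin_npi mult.commute mult.left_commute mult_2 sin_periodic_pi2 sin_zero
        sin_times_pi_eq_0 Ints_of_nat mult_2_right of_nat_mult of_nat_numeral Ints_mult Ints_numeral)
    moreover have "cos (real k * (2*pi)) = 1"
      by (metis cos_npi_int cos_one_2pi_int of_int_of_nat_eq mult.commute mult.left_commute)
    ultimately show ?thesis by (simp add: g_def)
  qed
  ultimately show ?thesis by simp
qed


definition lnc :: "nat \<Rightarrow> complex" where "lnc n = (-1) ^ Suc n / of_nat n"

lemma norm_lnc: "norm (lnc n) \<le> 1"
proof -
  have "norm (lnc n) = 1 / real n" unfolding lnc_def norm_divide norm_power norm_of_nat by simp
  thus ?thesis by (cases "n = 0") auto
qed

lemma lnc0: "lnc 0 = 0" by (simp add: lnc_def)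

lemma geom_le: fixes r :: real assumes "0 \<le> r" "r < 1" shows "(\<Sum>i<M. r ^ i) \<le> 1 / (1 - r)"
proof -
  have "(\<Sum>i<M. r ^ i) = (1 - r ^ M) / (1 - r)" using assms geometric_sum[of r M]
    by (simp add: field_simps)
  also have "\<dots> \<le> 1 / (1 - r)" using assms by (intro divide_right_mono) auto
  finally show ?thesis .
qed

lemma Ln_tail: fixes u :: complex assumes u: "norm u < 1"
  shows "norm (Ln (1 + u) - (\<Sum>n<N. lnc n * u ^ n)) \<le> norm u ^ N / (1 - norm u)"
proof -
  have s: "(\<lambda>n. lnc n * u ^ n) sums Ln (1 + u)" using Ln_series[OF u] by (simp add: lnc_def)
  have s2: "(\<lambda>i. lnc (i + N) * u ^ (i + N)) sums (Ln (1 + u) - (\<Sum>n<N. lnc n * u ^ n))"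
    using sums_split_initial_segment[OF s, of N] by simp
  hence lim: "(\<lambda>M. norm (\<Sum>i<M. lnc (i + N) * u ^ (i + N))) \<longlonglongrightarrow> norm (Ln (1 + u) - (\<Sum>n<N. lnc n * u ^ n))"
    unfolding sums_def by (rule tendsto_norm)
  have bd: "norm (\<Sum>i<M. lnc (i + N) * u ^ (i + N)) \<le> norm u ^ N / (1 - norm u)" for M
  proof -
    have "norm (\<Sum>i<M. lnc (i + N) * u ^ (i + N)) \<le> (\<Sum>i<M. norm (lnc (i + N)) * norm u ^ (i + N))"
      by (rule order.trans[OF norm_sum]) (simp add: norm_mult norm_power)
    also have "\<dots> \<le> (\<Sum>i<M. norm u ^ (i + N))"
      by (intro sum_mono mult_left_le_one_le norm_lnc) auto
    also have "\<dots> = norm u ^ N * (\<Sum>i<M. norm u ^ i)" by (simp add: sum_distrib_left power_add mult_ac)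
    also have "\<dots> \<le> norm u ^ N * (1 / (1 - norm u))" using u by (intro mult_left_mono geom_le) auto
    finally show ?thesis by simp
  qed
  show ?thesis by (rule LIMSEQ_le_const2[OF lim]) (use bd in auto)
qed

lemma J_zero: fixes x :: complex assumes x: "norm x < 1"
  shows "integral {0..2*pi} (\<lambda>t. ln (norm (1 + x * cis t))) = 0"
proof -
  define r where "r = norm x"
  have r: "0 \<le> r" "r < 1" using x by (auto simp: r_def)
  define f where "f t = ln (norm (1 + x * cis t))" for t
  have nz: "1 + x * cis t \<noteq> 0" for t
  proof
    assume h: "1 + x * cis t = 0"
    have "x * cis t = (1 + x * cis t) - 1" by simp
    also have "\<dots> = -1" using h by simp
    finally have "x * cis t = -1" .
    hence "norm (x * cis t) = 1" by simp
    thus False using x by (simp add: norm_mult)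
  qed
  have fcont: "continuous_on {0..2*pi} f" unfolding f_def
    by (intro continuous_intros) (auto simp: nz)
  have fint: "f integrable_on {0..2*pi}" by (rule integrable_continuous_real[OF fcont])
  have bound: "\<bar>integral {0..2*pi} f\<bar> \<le> 2 * pi * (r ^ N / (1 - r))" for N
  proof -
    define P where "P t = Re (\<Sum>n<N. lnc n * (x * cis t) ^ n)" for t
    have Peq: "P t = (\<Sum>n<N. Re ((lnc n * x ^ n) * cis (real n * t)))" for t
    proof -
      have pw: "(x * cis t)^n = x^n * cis (real n * t)" for n by (simp only: power_mult_distrib Complex.DeMoivre)
      show ?thesis unfolding P_def Re_sum pw by (simp only: mult.assoc)
    qed
    have Pint: "(P has_integral 0) {0..2*pi}"
    proof -
      have "((\<lambda>t. \<Sum>n<N. Re ((lnc n * x ^ n) * cis (real n * t))) has_integral (\<Sum>n<N. 0)) {0..2*pi}"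
      proof (rule has_integral_sum)
        fix n assume "n \<in> {..<N}"
        show "((\<lambda>t. Re ((lnc n * x ^ n) * cis (real n * t))) has_integral 0) {0..2*pi}"
        proof (cases "n = 0")
          case True thus ?thesis by (simp add: lnc0)
        next
          case False thus ?thesis by (intro int_Re_cis) auto
        qed
      qed simp
      hence H: "((\<lambda>t. \<Sum>n<N. Re ((lnc n * x ^ n) * cis (real n * t))) has_integral 0) {0..2*pi}" by simp
      have Pf: "P = (\<lambda>t. \<Sum>n<N. Re ((lnc n * x ^ n) * cis (real n * t)))" using Peq by (intro ext)
      show ?thesis unfolding Pf by (rule H)
    qed
    have close: "\<bar>f t - P t\<bar> \<le> r ^ N / (1 - r)" for t
    proof -
      have u: "norm (x * cis t) < 1" using x by (simp add: norm_mult)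
      have "f t = Re (Ln (1 + x * cis t))" unfolding f_def using nz by (simp add: Re_Ln)
      hence "f t - P t = Re (Ln (1 + x * cis t) - (\<Sum>n<N. lnc n * (x * cis t) ^ n))"
        by (simp add: P_def)
      hence "\<bar>f t - P t\<bar> \<le> norm (Ln (1 + x * cis t) - (\<Sum>n<N. lnc n * (x * cis t) ^ n))"
        by (simp only: abs_Re_le_cmod)
      also have "\<dots> \<le> norm (x * cis t) ^ N / (1 - norm (x * cis t))" by (rule Ln_tail[OF u])
      finally show ?thesis by (simp add: norm_mult r_def)
    qed
    have dint: "(\<lambda>t. f t - P t) integrable_on {0..2*pi}"
      by (intro integrable_diff fint has_integral_integrable[OF Pint])
    have ieq: "integral {0..2*pi} f = integral {0..2*pi} (\<lambda>t. f t - P t)"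
      using integral_diff[OF fint has_integral_integrable[OF Pint]] integral_unique[OF Pint] by simp
    have cint: "(\<lambda>t. c) integrable_on {0..2*pi}" for c :: real by (rule integrable_const_ivl)
    have up: "integral {0..2*pi} (\<lambda>t. f t - P t) \<le> integral {0..2*pi} (\<lambda>t. r ^ N / (1 - r))"
      by (rule integral_le[OF dint cint]) (use close in \<open>auto simp: abs_le_iff\<close>)
    have lo: "integral {0..2*pi} (\<lambda>t. - (r ^ N / (1 - r))) \<le> integral {0..2*pi} (\<lambda>t. f t - P t)"
    proof (rule integral_le[OF cint dint])
      fix t show "- (r ^ N / (1 - r)) \<le> f t - P t" using close[of t] by linarith
    qed
    show ?thesis using up lo ieq by (simp add: abs_le_iff)
  qed
  have lim: "(\<lambda>N. 2 * pi * (r ^ N / (1 - r))) \<longlonglongrightarrow> 2 * pi * (0 / (1 - r))"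
    using r by (intro tendsto_intros LIMSEQ_power_zero) auto
  have "\<bar>integral {0..2*pi} f\<bar> \<le> 0"
    using LIMSEQ_le_const[OF lim, of "\<bar>integral {0..2*pi} f\<bar>"] bound by auto
  moreover have "f = (\<lambda>t. ln (cmod (1 + x * cis t)))" by (simp add: f_def fun_eq_iff)
  ultimately show ?thesis by simp
qed


lemma int_const_2pi: "integral {0..2*pi} (\<lambda>t. c) = 2 * pi * (c::real)"
  by simp

lemma circle_ne: fixes s0 rho :: complex assumes "norm (s0 - rho) \<noteq> r" "r \<ge> 0"
  shows "s0 + of_real r * cis t - rho \<noteq> 0"
proof
  assume "s0 + of_real r * cis t - rho = 0"
  hence "s0 - rho = - (of_real r * cis t)" by (simp add: algebra_simps)
  hence "norm (s0 - rho) = r" using assms(2) by (simp add: norm_mult)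
  thus False using assms(1) by simp
qed

lemma ne1: fixes x :: complex assumes x: "norm x < 1" shows "1 + x * cis t \<noteq> 0"
proof
  assume h: "1 + x * cis t = 0"
  have "x * cis t = (1 + x * cis t) - 1" by simp
  also have "\<dots> = -1" using h by simp
  finally have "norm (x * cis t) = 1" by simp
  thus False using x by (simp add: norm_mult)
qed

lemma cont1: fixes x :: complex assumes x: "norm x < 1" shows "continuous_on S (\<lambda>t. ln (norm (1 + x * cis t)))"
  by (intro continuous_intros) (auto simp: ne1[OF x])

lemma mean_factor: fixes s0 rho :: complex and r :: real
  assumes r: "r > 0" and ne: "s0 \<noteq> rho" and nr: "norm (s0 - rho) \<noteq> r"
  shows "2*pi * ln (norm (s0 - rho)) \<le> integral {0..2*pi} (\<lambda>t. ln (norm (s0 + of_real r * cis t - rho)))"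
proof -
  define c where "c = s0 - rho"
  define D where "D = norm c"
  have D0: "D > 0" using ne by (simp add: D_def c_def)
  have c0: "c \<noteq> 0" using ne by (simp add: c_def)
  show ?thesis
  proof (cases "D > r")
    case True
    define x where "x = of_real r / c"
    have x: "norm x < 1" using True D0 r by (simp add: x_def D_def norm_divide)
    have eq: "ln (norm (s0 + of_real r * cis t - rho)) = ln D + ln (norm (1 + x * cis t))" for t
    proof -
      have "s0 + of_real r * cis t - rho = c * (1 + x * cis t)" using c0 by (simp add: x_def c_def field_simps)
      moreover have "1 + x * cis t \<noteq> 0"
      proof
        assume h: "1 + x * cis t = 0"
        have "x * cis t = (1 + x * cis t) - 1" by simp
        also have "\<dots> = -1" using h by simp
        finally have "norm (x * cis t) = 1" by simp
        thus False using x by (simp add: norm_mult)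
      qed
      ultimately show ?thesis using c0 by (simp add: norm_mult ln_mult D_def)
    qed
    have "integral {0..2*pi} (\<lambda>t. ln (norm (s0 + of_real r * cis t - rho))) = integral {0..2*pi} (\<lambda>t. ln D + ln (norm (1 + x * cis t)))"
      by (simp add: eq)
    also have "\<dots> = 2 * pi * ln D"
    proof -
      have cont: "continuous_on {0..2*pi} (\<lambda>t. ln (norm (1 + x * cis t)))"
        using x by (rule cont1)
      have "integral {0..2*pi} (\<lambda>t. ln D + ln (norm (1 + x * cis t))) = integral {0..2*pi} (\<lambda>t. ln D) + integral {0..2*pi} (\<lambda>t. ln (norm (1 + x * cis t)))"
        by (rule integral_add) (auto intro: integrable_continuous_real cont)
      thus ?thesis using J_zero[OF x] by simp
    qed
    finally show ?thesis by (simp add: D_def c_def)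
  next
    case False
    hence Dr: "D < r" using nr by (simp add: D_def c_def)
    define y where "y = cnj (c / of_real r)"
    have y: "norm y < 1" using Dr r by (simp add: y_def D_def norm_divide)
    have eq: "ln (norm (s0 + of_real r * cis t - rho)) = ln r + ln (norm (1 + y * cis t))" for t
    proof -
      have ct: "cis t * cis (-t) = 1" by (simp add: cis_mult)
      have "of_real r * cis t * (1 + (c / of_real r) * cis (-t)) = of_real r * cis t + (of_real r / of_real r) * c * (cis t * cis (-t))"
        by (simp add: algebra_simps)
      also have "\<dots> = of_real r * cis t + c" using r ct by simp
      finally have "s0 + of_real r * cis t - rho = of_real r * cis t * (1 + (c / of_real r) * cis (-t))"
        by (simp add: c_def)
      hence "norm (s0 + of_real r * cis t - rho) = r * norm (1 + (c / of_real r) * cis (-t))"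
        using r by (simp add: norm_mult)
      also have "norm (1 + (c / of_real r) * cis (-t)) = norm (cnj (1 + (c / of_real r) * cis (-t)))"
        by (rule complex_mod_cnj[symmetric])
      also have "cnj (1 + (c / of_real r) * cis (-t)) = 1 + y * cis t"
        by (simp add: y_def cis_cnj)
      finally have n: "norm (s0 + of_real r * cis t - rho) = r * norm (1 + y * cis t)" .
      have "1 + y * cis t \<noteq> 0"
      proof
        assume h: "1 + y * cis t = 0"
        have "y * cis t = (1 + y * cis t) - 1" by simp
        also have "\<dots> = -1" using h by simp
        finally have "norm (y * cis t) = 1" by simp
        thus False using y by (simp add: norm_mult)
      qed
      thus ?thesis using r by (simp add: n ln_mult)
    qed
    have cont: "continuous_on {0..2*pi} (\<lambda>t. ln (norm (1 + y * cis t)))"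
      using y by (rule cont1)
    have "integral {0..2*pi} (\<lambda>t. ln (norm (s0 + of_real r * cis t - rho))) = integral {0..2*pi} (\<lambda>t. ln r + ln (norm (1 + y * cis t)))"
      by (simp add: eq)
    also have "\<dots> = integral {0..2*pi} (\<lambda>t. ln r) + integral {0..2*pi} (\<lambda>t. ln (norm (1 + y * cis t)))"
      by (rule integral_add) (auto intro: integrable_continuous_real cont)
    also have "\<dots> = 2 * pi * ln r" using J_zero[OF y] by simp
    finally have I: "integral {0..2*pi} (\<lambda>t. ln (norm (s0 + of_real r * cis t - rho))) = 2 * pi * ln r" .
    have "ln D \<le> ln r" using Dr D0 by simp
    thus ?thesis using I by (simp add: D_def c_def)
  qed
qed




lemma submean_good: fixes P :: "complex poly" and s0 :: complex and r :: real
  assumes r: "r > 0" and big: "norm (poly P s0) > 1"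
    and good: "\<And>rho. poly P rho = 0 \<Longrightarrow> norm (s0 - rho) \<noteq> r"
  shows "2*pi * logplus (norm (poly P s0)) \<le> integral {0..2*pi} (\<lambda>t. logplus (norm (poly P (s0 + of_real r * cis t))))"
proof -
  obtain root where dec: "smult (lead_coeff P) (\<Prod>i<degree P. [:-root i, 1:]) = P"
    using complex_poly_decompose' by blast
  define lc where "lc = lead_coeff P"
  have P0: "P \<noteq> 0" using big by auto
  hence lc0: "lc \<noteq> 0" by (simp add: lc_def)
  have pe: "poly P s = lc * (\<Prod>i<degree P. (s - root i))" for s
    by (subst dec[symmetric]) (simp add: poly_prod lc_def)
  have isroot: "poly P (root i) = 0" if "i < degree P" for i
    unfolding pe using that by (auto intro!: prod_zero)
  have s0r: "s0 \<noteq> root i" if "i < degree P" for i using isroot[OF that] big by auto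
  have gr: "norm (s0 - root i) \<noteq> r" if "i < degree P" for i using good isroot that by blast
  have lnP: "ln (norm (poly P s)) = ln (norm lc) + (\<Sum>i<degree P. ln (norm (s - root i)))"
    if "poly P s \<noteq> 0" for s
  proof -
    have nz: "s - root i \<noteq> 0" if "i < degree P" for i using \<open>poly P s \<noteq> 0\<close> isroot[OF that] by auto
    have "norm (poly P s) = norm lc * (\<Prod>i<degree P. norm (s - root i))"
      by (simp add: pe norm_mult prod_norm)
    moreover have "ln (\<Prod>i<degree P. norm (s - root i)) = (\<Sum>i<degree P. ln (norm (s - root i)))"
      by (rule ln_prod) (use nz in auto)
    moreover have "(\<Prod>i<degree P. norm (s - root i)) > 0" by (rule prod_pos) (use nz in auto)
    moreover have "norm lc > 0" using lc0 by simp
    ultimately show ?thesis by (simp only: ln_mult_pos)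
  qed
  have circ_ne: "poly P (s0 + of_real r * cis t) \<noteq> 0" for t
  proof
    assume h: "poly P (s0 + of_real r * cis t) = 0"
    have "norm (s0 - (s0 + of_real r * cis t)) = r" using r by (simp add: norm_mult)
    thus False using good[OF h] by simp
  qed
  have cont_fac: "continuous_on {0..2*pi} (\<lambda>t. ln (norm (s0 + of_real r * cis t - root i)))" if "i < degree P" for i
    by (intro continuous_intros) (use circle_ne[OF gr[OF that]] r in auto)
  have "integral {0..2*pi} (\<lambda>t. ln (norm (poly P (s0 + of_real r * cis t))))
      = integral {0..2*pi} (\<lambda>t. ln (norm lc) + (\<Sum>i<degree P. ln (norm (s0 + of_real r * cis t - root i))))"
    using lnP[OF circ_ne] by simp
  also have "\<dots> = integral {0..2*pi} (\<lambda>t. ln (norm lc)) + integral {0..2*pi} (\<lambda>t. \<Sum>i<degree P. ln (norm (s0 + of_real r * cis t - root i)))"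
    by (intro integral_add integrable_sum integrable_continuous_real cont_fac) auto
  also have "integral {0..2*pi} (\<lambda>t. \<Sum>i<degree P. ln (norm (s0 + of_real r * cis t - root i)))
      = (\<Sum>i<degree P. integral {0..2*pi} (\<lambda>t. ln (norm (s0 + of_real r * cis t - root i))))"
    by (intro integral_sum integrable_continuous_real cont_fac) auto
  finally have E: "integral {0..2*pi} (\<lambda>t. ln (norm (poly P (s0 + of_real r * cis t))))
     = integral {0..2*pi} (\<lambda>t. ln (norm lc)) + (\<Sum>i<degree P. integral {0..2*pi} (\<lambda>t. ln (norm (s0 + of_real r * cis t - root i))))" .
  have M: "(\<Sum>i<degree P. 2*pi * ln (norm (s0 - root i))) \<le> (\<Sum>i<degree P. integral {0..2*pi} (\<lambda>t. ln (norm (s0 + of_real r * cis t - root i))))"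
    by (intro sum_mono mean_factor r s0r gr) auto
  have I1: "integral {0..2*pi} (\<lambda>t. ln (norm (poly P (s0 + of_real r * cis t))))
      \<ge> 2*pi * ln (norm lc) + 2*pi * (\<Sum>i<degree P. ln (norm (s0 - root i)))"
    using E M by (simp add: sum_distrib_left)
  have "2*pi * ln (norm lc) + 2*pi * (\<Sum>i<degree P. ln (norm (s0 - root i))) = 2*pi * ln (norm (poly P s0))"
  proof -
    have "poly P s0 \<noteq> 0" using big by auto
    from lnP[OF this] show ?thesis by (simp add: algebra_simps)
  qed
  also have "\<dots> = 2*pi * logplus (norm (poly P s0))" using big by (simp add: L_alt max_def)
  finally have I2: "2*pi * logplus (norm (poly P s0)) \<le> integral {0..2*pi} (\<lambda>t. ln (norm (poly P (s0 + of_real r * cis t))))"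
    using I1 by simp
  have c1: "continuous_on {0..2*pi} (\<lambda>t. ln (norm (poly P (s0 + of_real r * cis t))))"
    by (intro continuous_intros) (use circ_ne in auto)
  have c2: "continuous_on {0..2*pi} (\<lambda>t. logplus (norm (poly P (s0 + of_real r * cis t))))"
    unfolding L_alt by (intro continuous_intros) auto
  have "integral {0..2*pi} (\<lambda>t. ln (norm (poly P (s0 + of_real r * cis t)))) \<le> integral {0..2*pi} (\<lambda>t. logplus (norm (poly P (s0 + of_real r * cis t))))"
    by (rule integral_le[OF integrable_continuous_real[OF c1] integrable_continuous_real[OF c2]])
       (use circ_ne in \<open>auto intro: L_ge_ln\<close>)
  thus ?thesis using I2 by linarith
qed




lemma submean_extend: fixes f :: "complex \<Rightarrow> real" and s0 :: complex
  assumes cont: "continuous_on UNIV f" and r: "r > 0" and fin: "finite B"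
    and good: "\<And>r'. r' > 0 \<Longrightarrow> r' \<notin> B \<Longrightarrow> c \<le> integral {0..2*pi} (\<lambda>t. f (s0 + of_real r' * cis t))"
  shows "c \<le> integral {0..2*pi} (\<lambda>t. f (s0 + of_real r * cis t))"
proof (rule field_le_epsilon)
  fix \<epsilon> :: real assume eps: "\<epsilon> > 0"
  define S where "S = cball s0 (r + 1)"
  have "uniformly_continuous_on S f"
    by (rule compact_uniformly_continuous[OF continuous_on_subset[OF cont]]) (auto simp: S_def)
  moreover have e0: "\<epsilon> / (2*pi) > 0" using eps by simp
  ultimately obtain \<eta> where eta: "\<eta> > 0" and uc: "\<And>x y. x \<in> S \<Longrightarrow> y \<in> S \<Longrightarrow> dist y x < \<eta> \<Longrightarrow> dist (f y) (f x) < \<epsilon> / (2*pi)"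
    unfolding uniformly_continuous_on_def by metis
  define h where "h = min \<eta> 1"
  have h: "h > 0" "h \<le> \<eta>" "h \<le> 1" using eta by (auto simp: h_def)
  have "infinite {r<..<r+h}" using h by (intro infinite_Ioo) auto
  hence "\<not> {r<..<r+h} \<subseteq> B" using fin finite_subset by blast
  then obtain r' where "r' \<in> {r<..<r+h}" "r' \<notin> B" by blast
  hence r': "r < r'" "r' < r + h" "r' \<notin> B" by auto
  have r'0: "r' > 0" using r r' by simp
  have cf: "continuous_on {0..2*pi} (\<lambda>t. f (s0 + of_real \<rho> * cis t))" for \<rho>
    by (intro continuous_on_compose2[OF cont] continuous_intros) auto
  have pt: "f (s0 + of_real r' * cis t) - \<epsilon> / (2*pi) \<le> f (s0 + of_real r * cis t)" for t
  proof -
    have xS: "s0 + of_real r * cis t \<in> S" using r by (simp add: S_def dist_norm norm_mult)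
    have yS: "s0 + of_real r' * cis t \<in> S" using r' h r'0 by (simp add: S_def dist_norm norm_mult)
    have "dist (s0 + of_real r' * cis t) (s0 + of_real r * cis t) = \<bar>r' - r\<bar>"
      by (simp add: dist_norm norm_mult left_diff_distrib[symmetric] of_real_diff[symmetric] del: of_real_diff)
    also have "\<dots> < \<eta>" using r' h by simp
    finally have "dist (f (s0 + of_real r' * cis t)) (f (s0 + of_real r * cis t)) < \<epsilon> / (2*pi)"
      by (rule uc[OF xS yS])
    thus ?thesis by (simp add: dist_real_def abs_less_iff)
  qed
  have "integral {0..2*pi} (\<lambda>t. f (s0 + of_real r' * cis t) - \<epsilon> / (2*pi)) \<le> integral {0..2*pi} (\<lambda>t. f (s0 + of_real r * cis t))"
  proof (rule integral_le)
    show "(\<lambda>t. f (s0 + of_real r' * cis t) - \<epsilon> / (2*pi)) integrable_on {0..2*pi}"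
      by (intro integrable_diff integrable_continuous_real cf integrable_const_ivl)
  qed (auto intro: integrable_continuous_real cf pt)
  moreover have "integral {0..2*pi} (\<lambda>t. f (s0 + of_real r' * cis t) - \<epsilon> / (2*pi)) = integral {0..2*pi} (\<lambda>t. f (s0 + of_real r' * cis t)) - \<epsilon>"
    by (subst integral_diff) (auto intro: integrable_continuous_real cf)
  moreover have "c \<le> integral {0..2*pi} (\<lambda>t. f (s0 + of_real r' * cis t))" by (rule good[OF r'0 r'(3)])
  ultimately show "c \<le> integral {0..2*pi} (\<lambda>t. f (s0 + of_real r * cis t)) + \<epsilon>" by linarith
qed

lemma submean_poly: fixes P :: "complex poly" and s0 :: complex and r :: real
  assumes r: "r > 0"
  shows "2*pi * logplus (norm (poly P s0)) \<le> integral {0..2*pi} (\<lambda>t. logplus (norm (poly P (s0 + of_real r * cis t))))"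
proof (cases "norm (poly P s0) > 1")
  case False
  hence "logplus (norm (poly P s0)) = 0" by (simp add: logplus_def)
  moreover have "0 \<le> integral {0..2*pi} (\<lambda>t. logplus (norm (poly P (s0 + of_real r * cis t))))"
  proof (rule integral_nonneg)
    show "(\<lambda>t. logplus (norm (poly P (s0 + of_real r * cis t)))) integrable_on {0..2*pi}"
      unfolding L_alt by (intro integrable_continuous_real continuous_intros) auto
  qed (simp add: L_nonneg)
  ultimately show ?thesis by simp
next
  case True
  hence P0: "P \<noteq> 0" by auto
  show ?thesis
  proof (rule submean_extend[where B = "(\<lambda>\<rho>. norm (s0 - \<rho>)) ` {\<rho>. poly P \<rho> = 0}"])
    show "continuous_on UNIV (\<lambda>s. logplus (norm (poly P s)))"
      unfolding L_alt by (intro continuous_intros) auto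
    show "finite ((\<lambda>\<rho>. norm (s0 - \<rho>)) ` {\<rho>. poly P \<rho> = 0})"
      using poly_roots_finite[OF P0] by simp
    fix r' :: real assume "r' > 0" "r' \<notin> (\<lambda>\<rho>. norm (s0 - \<rho>)) ` {\<rho>. poly P \<rho> = 0}"
    thus "2*pi * logplus (norm (poly P s0)) \<le> integral {0..2*pi} (\<lambda>t. logplus (norm (poly P (s0 + of_real r' * cis t))))"
      by (intro submean_good True) auto
  qed (rule r)
qed




definition pf :: "(complex \<Rightarrow> complex) \<Rightarrow> bool" where "pf f \<longleftrightarrow> (\<exists>P. \<forall>s. f s = poly P s)"

lemma pf_const: "pf (\<lambda>s. c)" unfolding pf_def by (intro exI[of _ "[:c:]"]) simp
lemma pf_line: "pf (\<lambda>s. a + s * b)" unfolding pf_def by (intro exI[of _ "[:a, b:]"]) (simp add: mult.commute)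
lemma pf_add: "pf f \<Longrightarrow> pf g \<Longrightarrow> pf (\<lambda>s. f s + g s)"
  unfolding pf_def by (metis poly_add)
lemma pf_mult: "pf f \<Longrightarrow> pf g \<Longrightarrow> pf (\<lambda>s. f s * g s)"
  unfolding pf_def by (metis poly_mult)
lemma pf_pow: "pf f \<Longrightarrow> pf (\<lambda>s. f s ^ n)"
  by (induction n) (auto intro: pf_mult pf_const)
lemma pf_comp: "pf f \<Longrightarrow> pf (\<lambda>s. poly Q (f s))"
  unfolding pf_def by (metis poly_pcompose)
lemma pf_sum: "finite I \<Longrightarrow> (\<And>i. i \<in> I \<Longrightarrow> pf (f i)) \<Longrightarrow> pf (\<lambda>s. \<Sum>i\<in>I. f i s)"
  by (induction I rule: finite_induct) (auto intro: pf_add pf_const)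

lemma cont_usc: "continuous_on S f \<Longrightarrow> usc_on S f"
  unfolding usc_on_def continuous_on_def using order_tendstoD(2) by blast

lemma plus_pair: "(a :: 'a::plus \<times> 'b::plus) + (x, y) = (fst a + x, snd a + y)"
  by (cases a) simp

context setting begin

lemma pf_zs: "pf f \<Longrightarrow> pf (\<lambda>s. zs n (f s))"
  by (induction n) (auto simp: zs_0 zs_Suc intro: pf_comp)

lemma pf_Qit: "pf f \<Longrightarrow> pf g \<Longrightarrow> pf (\<lambda>s. Qit p q n (f s) (g s))"
proof (induction n)
  case 0 thus ?case by simp
next
  case (Suc n)
  show ?case unfolding Qit_Suc evalq_sum
    by (intro pf_sum pf_mult pf_comp pf_zs pf_pow Suc) auto
qed

lemma submean_F: assumes r: "r > 0"
  shows "2*pi * F m (a1 + s0 * b1) (a2 + s0 * b2)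
     \<le> integral {0..2*pi} (\<lambda>t. F m (a1 + (s0 + of_real r * cis t) * b1) (a2 + (s0 + of_real r * cis t) * b2))"
proof -
  have "pf (\<lambda>s. Qit p q m (a1 + s * b1) (a2 + s * b2))" by (intro pf_Qit pf_line)
  then obtain P where P: "\<And>s. Qit p q m (a1 + s * b1) (a2 + s * b2) = poly P s" unfolding pf_def by blast
  have D: "real d ^ m > 0" using d_pos by simp
  have "2*pi * logplus (norm (poly P s0)) \<le> integral {0..2*pi} (\<lambda>t. logplus (norm (poly P (s0 + of_real r * cis t))))"
    by (rule submean_poly[OF r])
  hence "2*pi * logplus (norm (poly P s0)) / real d ^ m \<le> integral {0..2*pi} (\<lambda>t. logplus (norm (poly P (s0 + of_real r * cis t)))) / real d ^ m"
    using D by (intro divide_right_mono) auto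
  also have "\<dots> = integral {0..2*pi} (\<lambda>t. logplus (norm (poly P (s0 + of_real r * cis t))) / real d ^ m)"
    by (simp add: integral_divide)
  finally show ?thesis unfolding F_def A_def P by simp
qed

lemma psh_G: "plurisubharmonic_on (escape_set p \<times> UNIV) (\<lambda>(z, w). G z w)"
  unfolding plurisubharmonic_on_def
proof (intro conjI ballI allI)
  let ?\<Omega> = "escape_set p \<times> (UNIV :: complex set)"
  show "open ?\<Omega>" by (intro open_Times open_escape) auto
  show "usc_on ?\<Omega> (\<lambda>(z, w). G z w)" by (rule cont_usc[OF cont_G])
  fix a :: "complex \<times> complex" and b :: "complex \<times> complex"
  assume a: "a \<in> ?\<Omega>"
  define U where "U = {s::complex. a + (s * fst b, s * snd b) \<in> ?\<Omega>}"
  define u where "u s = G (fst a + s * fst b) (snd a + s * snd b)" for s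
  have ueq: "(\<lambda>s. (\<lambda>(z, w). G z w) (a + (s * fst b, s * snd b))) = u"
    by (auto simp: u_def plus_pair fun_eq_iff)
  have Ueq: "U = {s. fst a + s * fst b \<in> escape_set p}" by (auto simp: U_def plus_pair)
  have ucont: "continuous_on U u"
  proof -
    have "continuous_on U ((\<lambda>(z, w). G z w) \<circ> (\<lambda>s. a + (s * fst b, s * snd b)))"
      by (rule continuous_on_compose[OF _ continuous_on_subset[OF cont_G]])
         (auto intro!: continuous_intros simp: U_def)
    thus ?thesis using ueq by (simp add: o_def)
  qed
  show "subharmonic_on {s. a + (s * fst b, s * snd b) \<in> ?\<Omega>} (\<lambda>s. (\<lambda>(z, w). G z w) (a + (s * fst b, s * snd b)))"
    unfolding ueq U_def[symmetric] subharmonic_on_def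
  proof (intro conjI ballI)
    show "usc_on U u" by (rule cont_usc[OF ucont])
    fix s0 assume s0: "s0 \<in> U"
    define z0 where "z0 = fst a + s0 * fst b"
    have z0: "z0 \<in> escape_set p" using s0 by (simp add: Ueq z0_def)
    obtain U' Bd N where U': "open U'" "z0 \<in> U'" "U' \<subseteq> escape_set p" "Bd \<longlonglongrightarrow> 0"
      and bd: "\<And>m z w. m \<ge> N \<Longrightarrow> z \<in> U' \<Longrightarrow> \<bar>F m z w - G z w\<bar> \<le> Bd m"
      by (rule local_unif[OF z0]) blast
    obtain \<epsilon> where eps: "\<epsilon> > 0" "ball z0 \<epsilon> \<subseteq> U'" using U'(1,2) open_contains_ball by blast
    define r0 where "r0 = \<epsilon> / (norm (fst b) + 1)"
    have nb: "norm (fst b) + 1 > 0" by (metis norm_ge_zero add_nonneg_pos zero_less_one)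
    have r0: "r0 > 0" unfolding r0_def using eps nb by (intro divide_pos_pos) auto
    show "\<exists>r0>0. \<forall>r. 0 < r \<and> r < r0 \<longrightarrow>
        set_integrable lborel {0..2 * pi} (\<lambda>t. u (s0 + complex_of_real r * cis t)) \<and>
        u s0 \<le> 1 / (2 * pi) * (LINT t:{0..2 * pi}|lborel. u (s0 + complex_of_real r * cis t))"
    proof (intro exI[of _ r0] conjI allI impI r0)
      fix r :: real assume rr: "0 < r \<and> r < r0"
      hence r: "r > 0" "r < r0" by auto
      have inU': "fst a + (s0 + of_real r * cis t) * fst b \<in> U'" for t
      proof -
        have "dist z0 (fst a + (s0 + of_real r * cis t) * fst b) = r * norm (fst b)"
          using r by (simp add: z0_def dist_norm algebra_simps norm_mult)
        also have "\<dots> \<le> r * (norm (fst b) + 1)" using r by simp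
        also have "\<dots> < r0 * (norm (fst b) + 1)" using r nb by (intro mult_strict_right_mono) auto
        also have "\<dots> = \<epsilon>" using nb by (simp add: r0_def)
        finally show ?thesis using eps(2) by auto
      qed
      have inU: "s0 + of_real r * cis t \<in> U" for t using inU'[of t] U'(3) by (auto simp: Ueq)
      have ccont: "continuous_on {0..2*pi} (\<lambda>t. u (s0 + of_real r * cis t))"
        by (rule continuous_on_compose2[OF ucont]) (auto intro!: continuous_intros simp: inU)
      show "set_integrable lborel {0..2 * pi} (\<lambda>t. u (s0 + complex_of_real r * cis t))"
        by (rule borel_integrable_atLeastAtMost'[OF ccont])
      have LI: "(LINT t:{0..2 * pi}|lborel. u (s0 + complex_of_real r * cis t)) = integral {0..2*pi} (\<lambda>t. u (s0 + of_real r * cis t))"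
        by (rule set_borel_integral_eq_integral(2)[OF borel_integrable_atLeastAtMost'[OF ccont]])
      define I where "I = integral {0..2*pi} (\<lambda>t. u (s0 + of_real r * cis t))"
      have key: "2*pi * u s0 \<le> I + 4*pi * Bd m" if m: "m \<ge> N" for m
      proof -
        let ?Fm = "\<lambda>s. F m (fst a + s * fst b) (snd a + s * snd b)"
        have c1: "\<bar>?Fm s0 - u s0\<bar> \<le> Bd m" unfolding u_def using bd[OF m U'(2)] by (simp add: z0_def)
        have c2: "?Fm (s0 + of_real r * cis t) \<le> u (s0 + of_real r * cis t) + Bd m" for t
          using bd[OF m inU'[of t], of "snd a + (s0 + of_real r * cis t) * snd b"] unfolding u_def by (simp add: abs_le_iff)
        have Fcont: "continuous_on {0..2*pi} (\<lambda>t. ?Fm (s0 + of_real r * cis t))"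
          using cont_F[of "UNIV" m] by (intro continuous_on_compose2[OF cont_F[of UNIV m], where f = "\<lambda>t. (fst a + (s0 + of_real r * cis t) * fst b, snd a + (s0 + of_real r * cis t) * snd b)", simplified]) (auto intro!: continuous_intros)
        have "2*pi * ?Fm s0 \<le> integral {0..2*pi} (\<lambda>t. ?Fm (s0 + of_real r * cis t))"
          by (rule submean_F[OF r(1)])
        also have "\<dots> \<le> integral {0..2*pi} (\<lambda>t. u (s0 + of_real r * cis t) + Bd m)"
          by (rule integral_le) (auto intro!: integrable_continuous_real Fcont continuous_intros ccont c2)
        also have "\<dots> = I + 2*pi * Bd m"
          by (subst integral_add) (auto intro: integrable_continuous_real ccont simp: I_def)
        finally have "2*pi * ?Fm s0 \<le> I + 2*pi * Bd m" .
        moreover have "2*pi * u s0 \<le> 2*pi * ?Fm s0 + 2*pi * Bd m"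
        proof -
          have "u s0 \<le> ?Fm s0 + Bd m" using c1 by linarith
          hence "2*pi * u s0 \<le> 2*pi * (?Fm s0 + Bd m)" by (intro mult_left_mono) auto
          thus ?thesis by (simp add: distrib_left)
        qed
        ultimately show ?thesis by simp
      qed
      have lim: "(\<lambda>m. I + 4*pi * Bd m) \<longlonglongrightarrow> I + 4*pi * 0" by (intro tendsto_intros U'(4))
      have "2*pi * u s0 \<le> I"
        using LIMSEQ_le_const[OF lim, of "2*pi * u s0"] key by auto
      thus "u s0 \<le> 1 / (2 * pi) * (LINT t:{0..2 * pi}|lborel. u (s0 + complex_of_real r * cis t))"
        unfolding LI I_def[symmetric] by (simp add: field_simps)
    qed
  qed
qed

end

theorem corollary5p5:
  fixes p :: "complex poly" and q :: "complex poly poly" and \<delta> d \<gamma> :: nat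
  assumes p_monic: "lead_coeff p = 1" and p_deg: "degree p = \<delta>" and \<delta>_ge: "\<delta> \<ge> 2"
    and q_deg: "degree q = d" and d_ge: "d \<ge> 2"
    and b_monic: "lead_coeff (lead_coeff q) = 1" and b_deg: "degree (lead_coeff q) = \<gamma>"
    and \<delta>_lt: "\<delta> < d" and \<gamma>_ge: "\<gamma> \<ge> 1"
  defines "\<alpha> \<equiv> alpha_exp p q"
  shows "\<exists>G Gf Gfa :: complex \<Rightarrow> complex \<Rightarrow> real.
     (\<forall>z w. (\<lambda>n. logplus (cmod (Qit p q n z w)) / real d ^ n) \<longlonglongrightarrow> G z w)
   \<and> continuous_on (escape_set p \<times> UNIV) (\<lambda>(z, w). G z w)
   \<and> plurisubharmonic_on (escape_set p \<times> UNIV) (\<lambda>(z, w). G z w)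
   \<and> (\<forall>z w. (\<lambda>n. logplus (max (cmod ((poly p ^^ n) z)) (cmod (Qit p q n z w))) / real d ^ n)
               \<longlonglongrightarrow> Gf z w)
   \<and> (\<forall>z w. (\<lambda>n. logplus (max (rpow (cmod ((poly p ^^ n) z)) (max \<alpha> 0)) (cmod (Qit p q n z w)))
                    / real d ^ n) \<longlonglongrightarrow> Gfa z w)
   \<and> (\<forall>z w. G z w = Gf z w \<and> G z w = Gfa z w)
   \<and> (\<forall>z\<in>escape_set p. \<forall>w.
        (\<lambda>n. logplus (cmod (Qit p q n z w) / rpow (cmod ((poly p ^^ n) z)) \<alpha>) / real d ^ n)
          \<longlonglongrightarrow> G z w)"
proof -
  interpret S: setting p q \<delta> d \<gamma>
    using p_monic p_deg \<delta>_ge q_deg d_ge b_monic b_deg \<delta>_lt \<gamma>_ge by unfold_locales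
  have aeq: "\<alpha> = S.\<alpha>" by (simp add: \<alpha>_def S.\<alpha>_def)
  show ?thesis
  proof (intro exI[of _ S.G] conjI allI ballI)
    fix z w
    show "(\<lambda>n. logplus (cmod (Qit p q n z w)) / real d ^ n) \<longlonglongrightarrow> S.G z w"
      using S.F_lim[of z w] unfolding S.F_def S.A_def .
  next
    show "continuous_on (escape_set p \<times> UNIV) (\<lambda>(z, w). S.G z w)" by (rule S.cont_G)
  next
    show "plurisubharmonic_on (escape_set p \<times> UNIV) (\<lambda>(z, w). S.G z w)" by (rule S.psh_G)
  next
    fix z w
    show "(\<lambda>n. logplus (max (cmod ((poly p ^^ n) z)) (cmod (Qit p q n z w))) / real d ^ n) \<longlonglongrightarrow> S.G z w"
      by (rule S.Gf_lim)
  next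
    fix z w
    show "(\<lambda>n. logplus (max (rpow (cmod ((poly p ^^ n) z)) (max \<alpha> 0)) (cmod (Qit p q n z w))) / real d ^ n) \<longlonglongrightarrow> S.G z w"
      unfolding aeq by (rule S.Gfa_lim)
  next
    fix z w show "S.G z w = S.G z w" ..
  next
    fix z w show "S.G z w = S.G z w" ..
  next
    fix z w assume "z \<in> escape_set p"
    thus "(\<lambda>n. logplus (cmod (Qit p q n z w) / rpow (cmod ((poly p ^^ n) z)) \<alpha>) / real d ^ n) \<longlonglongrightarrow> S.G z w"
      unfolding aeq by (rule S.Ga_lim)
  qed
qed

end
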